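(* Let $C(m)=\{(Tr(ax))_{x\in L}:a\in\mathcal{R}\}\subseteq R^{|L|}$ and consider the ternary linear code $\phi(C(m))\subseteq\mathbb{F}_3^{3|L|}$. In each of the following cases, $\phi(C(m))$ is optimal, i.e. no ternary linear code of the same length and the same dimension has strictly larger minimum Hamming distance: (i) $m$ is odd and $L=L'$ (so $\phi(C(m))$ has length $(3^{3m+1}-3^{2m+1})/2$); (ii) $m$ is any positive integer and $L=\mathcal{R}^*$ (so $\phi(C(m))$ has length $3^{3m+1}-3^{2m+1}$).
   Context: Let $R=\mathbb{F}_3[u]/(u^3-1)$ and $\mathcal{R}=\mathbb{F}_{3^m}[u]/(u^3-1)=\mathbb{F}_{3^m}+u\mathbb{F}_{3^m}+u^2\mathbb{F}_{3^m}$. Every element of $\mathcal{R}$ is uniquely $x_1+x_2(u-1)+x_3(u-1)^2$ with $x_i\in\mathbb{F}_{3^m}$; $\mathcal{R}^*$ (the units) consists of those with $x_1\neq0$. $Tr:\mathcal{R}\to R$ is $Tr(a+ub+u^2c)=tr(a)+u\,tr(b)+u^2tr(c)$, with $tr$ the absolute trace $\mathbb{F}_{3^m}\to\mathbb{F}_3$. $\mathcal{Q}$ denotes the nonzero squares of $\mathbb{F}_{3^m}$ and $L'=\{x_1+x_2(u-1)+x_3(u-1)^2:x_1\in\mathcal{Q},x_2,x_3\in\mathbb{F}_{3^m}\}$. The Gray map $\phi:R\to\mathbb{F}_3^3$ is $\phi(a'+ub'+u^2c')=(a',b',c')$, extended coordinatewise to $R^n\to\mathbb{F}_3^{3n}$.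 *)

theory Defs
  imports Main
begin

text \<open>An element a + u b + u^2 c of F_{3^m}[u]/(u^3 - 1) is represented by the triple (a, b, c).
  The field F_{3^m} is an arbitrary finite field type 'a with CARD('a) = 3^m.\<close>

type_synonym 'a rtriple = "'a \<times> 'a \<times> 'a"

definition radd :: "'a::comm_ring_1 rtriple \<Rightarrow> 'a rtriple \<Rightarrow> 'a rtriple" where
  "radd x y = (case x of (a0, a1, a2) \<Rightarrow> case y of (b0, b1, b2) \<Rightarrow> (a0 + b0, a1 + b1, a2 + b2))"

definition rscale :: "'a::comm_ring_1 \<Rightarrow> 'a rtriple \<Rightarrow> 'a rtriple" where
  "rscale c x = (case x of (a0, a1, a2) \<Rightarrow> (c * a0, c * a1, c * a2))"

text \<open>Multiplication modulo u^3 = 1.\<close>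
definition rmul :: "'a::comm_ring_1 rtriple \<Rightarrow> 'a rtriple \<Rightarrow> 'a rtriple" where
  "rmul x y = (case x of (a0, a1, a2) \<Rightarrow> case y of (b0, b1, b2) \<Rightarrow>
     (a0 * b0 + a1 * b2 + a2 * b1, a0 * b1 + a1 * b0 + a2 * b2, a0 * b2 + a1 * b1 + a2 * b0))"

definition rone :: "'a::comm_ring_1 rtriple" where
  "rone = (1, 0, 0)"

definition u_minus_1 :: "'a::comm_ring_1 rtriple" where
  "u_minus_1 = (-1, 1, 0)"

definition urep :: "'a::comm_ring_1 \<Rightarrow> 'a \<Rightarrow> 'a \<Rightarrow> 'a rtriple" where
  "urep x1 x2 x3 = radd (rscale x1 rone)
      (radd (rscale x2 u_minus_1) (rscale x3 (rmul u_minus_1 u_minus_1)))"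

definition runits :: "'a::comm_ring_1 rtriple set" where
  "runits = {x. \<exists>y. rmul x y = rone}"

definition nz_squares :: "'a::field set" where
  "nz_squares = {y. y \<noteq> 0 \<and> (\<exists>z. y = z ^ 2)}"

definition L' :: "'a::field rtriple set" where
  "L' = {urep x1 x2 x3 | x1 x2 x3. x1 \<in> nz_squares}"

text \<open>Absolute trace F_{3^m} -> F_3 (values in the prime subfield of 'a).\<close>
definition abs_tr :: "nat \<Rightarrow> 'a::comm_ring_1 \<Rightarrow> 'a" where
  "abs_tr m x = (\<Sum>i<m. x ^ (3 ^ i))"

text \<open>Tr : calR -> R, applied coefficientwise; R-elements are triples over the prime field.\<close>
definition Tr :: "nat \<Rightarrow> 'a::comm_ring_1 rtriple \<Rightarrow> 'a rtriple" where
  "Tr m x = (case x of (a, b, c) \<Rightarrow> (abs_tr m a, abs_tr m b, abs_tr m c))"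

text \<open>F_3 is represented by the integers {0,1,2} with arithmetic modulo 3.
  An element of the prime subfield {0, 1, 1+1} of 'a is identified with 0, 1, 2.\<close>
definition to_F3 :: "'a::comm_ring_1 \<Rightarrow> int" where
  "to_F3 t = (if t = 0 then 0 else if t = 1 then 1 else 2)"

definition gray :: "'a::comm_ring_1 rtriple \<Rightarrow> int list" where
  "gray r = (case r of (a', b', c') \<Rightarrow> [to_F3 a', to_F3 b', to_F3 c'])"

definition gray_vec :: "'a::comm_ring_1 rtriple list \<Rightarrow> int list" where
  "gray_vec v = concat (map gray v)"

text \<open>The code C(m) with coordinates indexed by the enumeration xs of L, and its Gray image.\<close>
definition code_C :: "nat \<Rightarrow> 'a::comm_ring_1 rtriple list \<Rightarrow> 'a rtriple list set" where
  "code_C m xs = {map (\<lambda>x. Tr m (rmul a x)) xs | a. True}"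

definition gray_code :: "nat \<Rightarrow> 'a::comm_ring_1 rtriple list \<Rightarrow> int list set" where
  "gray_code m xs = gray_vec ` code_C m xs"

definition ter_words :: "nat \<Rightarrow> int list set" where
  "ter_words n = {w. length w = n \<and> set w \<subseteq> {0, 1, 2}}"

definition ter_add :: "int list \<Rightarrow> int list \<Rightarrow> int list" where
  "ter_add v w = map2 (\<lambda>x y. (x + y) mod 3) v w"

definition ter_smult :: "int \<Rightarrow> int list \<Rightarrow> int list" where
  "ter_smult c w = map (\<lambda>x. (c * x) mod 3) w"

definition ternary_linear_code :: "nat \<Rightarrow> int list set \<Rightarrow> bool" where
  "ternary_linear_code n C \<longleftrightarrow> C \<subseteq> ter_words n \<and> replicate n 0 \<in> C \<and>
     (\<forall>v\<in>C. \<forall>w\<in>C. ter_add v w \<in> C) \<and> (\<forall>c\<in>{0, 1, 2}. \<forall>w\<in>C. ter_smult c w \<in> C)"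

definition ter_span :: "nat \<Rightarrow> int list list \<Rightarrow> int list set" where
  "ter_span n B = {foldr ter_add (map2 ter_smult cs B) (replicate n 0) | cs.
                     length cs = length B \<and> set cs \<subseteq> {0, 1, 2}}"

definition ter_dim :: "nat \<Rightarrow> int list set \<Rightarrow> nat" where
  "ter_dim n C = (LEAST k. \<exists>B. set B \<subseteq> C \<and> length B = k \<and> ter_span n B = C)"

definition hamming :: "int list \<Rightarrow> int list \<Rightarrow> nat" where
  "hamming v w = card {i. i < length v \<and> v ! i \<noteq> w ! i}"

definition min_dist :: "int list set \<Rightarrow> nat" where
  "min_dist C = Min {hamming v w | v w. v \<in> C \<and> w \<in> C \<and> v \<noteq> w}"

definition optimal_ternary :: "nat \<Rightarrow> int list set \<Rightarrow> bool" where
  "optimal_ternary n C \<longleftrightarrow> ternary_linear_code n C \<and>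
     (\<forall>C'. ternary_linear_code n C' \<and> ter_dim n C' = ter_dim n C \<longrightarrow> min_dist C' \<le> min_dist C)"

end

theory Submission
  imports Defs "HOL-Number_Theory.Residues" "HOL-Computational_Algebra.Polynomial"
begin


definition addf :: "(nat \<Rightarrow> int) \<Rightarrow> (nat \<Rightarrow> int) \<Rightarrow> nat \<Rightarrow> int" where
  "addf f h = (\<lambda>i. (f i + h i) mod 3)"

fun grs :: "nat \<Rightarrow> nat \<Rightarrow> nat" where
  "grs 0 d = 0"
| "grs (Suc K) d = d + grs K ((d + 2) div 3)"

lemma ind_card: "finite A \<Longrightarrow> card {i\<in>A. P i} = (\<Sum>i\<in>A. if P i then 1 else 0)"
proof -
  assume "finite A"
  moreover have "{i\<in>A. P i} = A \<inter> Collect P" by auto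
  ultimately show ?thesis by (simp add: sum.If_cases)
qed

lemma triple_count:
  fixes a c :: int
  assumes "a \<in> {0,1,2}" "c \<in> {1,2}"
  shows "(if a \<noteq> 0 then 1 else 0) + (if (a + c) mod 3 \<noteq> 0 then 1 else 0)
        + (if ((a + c) mod 3 + c) mod 3 \<noteq> 0 then 1 else (0::nat)) = 2"
  using assms by auto

lemma m3a: "h \<in> {0,1,2::int} \<Longrightarrow> f \<in> {0,1,2::int} \<Longrightarrow> (((h+f) mod 3 + f) mod 3 + 0*c) mod 3 = 0 \<Longrightarrow> h = f"
  by auto
lemma m3b: "h \<in> {0,1,2::int} \<Longrightarrow> f \<in> {0,1,2::int} \<Longrightarrow> c \<in> {0,1,2::int} \<Longrightarrow> (((h+f) mod 3 + f) mod 3 + 1*c) mod 3 = 0 \<Longrightarrow> h = ((f + c) mod 3 + c) mod 3"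
  by auto
lemma m3c: "h \<in> {0,1,2::int} \<Longrightarrow> f \<in> {0,1,2::int} \<Longrightarrow> c \<in> {0,1,2::int} \<Longrightarrow> (((h+f) mod 3 + f) mod 3 + 2*c) mod 3 = 0 \<Longrightarrow> h = (f + c) mod 3"
  by auto
lemma m3d: "f \<in> {0,1,2::int} \<Longrightarrow> ((f+f) mod 3 + f) mod 3 = 0" by auto

lemma griesmer:
  fixes C :: "(nat \<Rightarrow> int) set" and I :: "nat set"
  assumes "finite I" "finite C"
    and vals: "\<forall>f\<in>C. \<forall>i. (i \<notin> I \<longrightarrow> f i = 0) \<and> f i \<in> {0,1,2}"
    and zero: "(\<lambda>_. 0) \<in> C"
    and addc: "\<forall>f\<in>C. \<forall>h\<in>C. addf f h \<in> C"
    and cardC: "3^K \<le> card C"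
    and wt: "\<forall>f\<in>C. f \<noteq> (\<lambda>_. 0) \<longrightarrow> d \<le> card {i\<in>I. f i \<noteq> 0}"
  shows "grs K d \<le> card I"
  using assms
proof (induction K arbitrary: I C d)
  case 0
  then show ?case by simp
next
  case (Suc K)
  note fI = Suc.prems(1) and fC = Suc.prems(2) and vals = Suc.prems(3) and zero = Suc.prems(4)
    and addc = Suc.prems(5) and cardC = Suc.prems(6) and wt = Suc.prems(7)
  define wtf where "wtf f = card {i\<in>I. f i \<noteq> (0::int)}" for f
  have "(3::nat) \<le> 3^Suc K" by simp
  then have "card C > 1" using cardC by linarith
  have "\<exists>f0\<in>C. f0 \<noteq> (\<lambda>_. 0)"
  proof (rule ccontr)
    assume "\<not> ?thesis"
    then have "C \<subseteq> {\<lambda>_. 0}" by auto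
    then have "card C \<le> 1" using card_mono[of "{\<lambda>_. 0}" C] by simp
    then show False using \<open>card C > 1\<close> by simp
  qed
  then obtain f0 where f0: "f0 \<in> C" "f0 \<noteq> (\<lambda>_. 0)" by blast
  define W where "W = wtf ` {f\<in>C. f \<noteq> (\<lambda>_. 0)}"
  have fW: "finite W" "W \<noteq> {}" using fC f0 unfolding W_def by auto
  define w0 where "w0 = Min W"
  obtain c0 where c0: "c0 \<in> C" "c0 \<noteq> (\<lambda>_. 0)" "wtf c0 = w0"
    using Min_in[OF fW] unfolding w0_def W_def by auto
  have minw: "\<And>f. f \<in> C \<Longrightarrow> f \<noteq> (\<lambda>_. 0) \<Longrightarrow> w0 \<le> wtf f"
    unfolding w0_def using fW unfolding W_def by (intro Min_le) auto
  have dw0: "d \<le> w0"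
  proof -
    have "d \<le> card {i\<in>I. c0 i \<noteq> 0}" using wt c0(1,2) by blast
    then show ?thesis using c0(3) unfolding wtf_def by simp
  qed
  define S where "S = {i\<in>I. c0 i \<noteq> 0}"
  define I' where "I' = I - S"
  have fS: "finite S" "finite I'" using fI unfolding S_def I'_def by auto
  have cardS: "card S = w0" using c0 unfolding S_def wtf_def by simp
  have w0pos: "w0 > 0"
  proof -
    obtain i where "c0 i \<noteq> 0" using c0(2) by auto
    then have "i \<in> S" using vals c0(1) unfolding S_def by auto
    then have "S \<noteq> {}" by auto
    then have "card S > 0" using fS(1) by (simp add: card_gt_0_iff)
    then show ?thesis using cardS by simp
  qed
  have IS: "I = S \<union> I'" "S \<inter> I' = {}" unfolding I'_def S_def by auto
  have c0S: "\<And>i. i \<in> S \<Longrightarrow> c0 i \<in> {1,2}" using vals c0(1) unfolding S_def by auto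
  have c0I': "\<And>i. i \<in> I' \<Longrightarrow> c0 i = 0" unfolding I'_def S_def by auto
  have KI: "wtf f + wtf (addf f c0) + wtf (addf (addf f c0) c0) = 2 * w0 + 3 * card {i\<in>I'. f i \<noteq> 0}"
    if fC': "f \<in> C" for f
  proof -
    define ind where "ind g i = (if g i \<noteq> (0::int) then 1 else (0::nat))" for g and i :: nat
    have e: "wtf g = (\<Sum>i\<in>S. ind g i) + (\<Sum>i\<in>I'. ind g i)" for g
    proof -
      have "wtf g = (\<Sum>i\<in>I. ind g i)" unfolding wtf_def ind_def using fI by (rule ind_card)
      also have "\<dots> = (\<Sum>i\<in>S. ind g i) + (\<Sum>i\<in>I'. ind g i)"
        using IS fS by (simp add: sum.union_disjoint)
      finally show ?thesis .
    qed
    have fv: "f i \<in> {0,1,2}" for i using vals fC' by auto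
    have S2: "(\<Sum>i\<in>S. ind f i + ind (addf f c0) i + ind (addf (addf f c0) c0) i) = (\<Sum>i\<in>S. 2)"
    proof (rule sum.cong)
      fix i assume "i \<in> S"
      then show "ind f i + ind (addf f c0) i + ind (addf (addf f c0) c0) i = 2"
        unfolding ind_def addf_def using triple_count[OF fv c0S] by simp
    qed simp
    have I3: "(\<Sum>i\<in>I'. ind f i + ind (addf f c0) i + ind (addf (addf f c0) c0) i) = (\<Sum>i\<in>I'. 3 * ind f i)"
    proof (rule sum.cong)
      fix i assume "i \<in> I'"
      then have "c0 i = 0" by (rule c0I')
      moreover have "f i mod 3 = f i" using fv[of i] by auto
      ultimately show "ind f i + ind (addf f c0) i + ind (addf (addf f c0) c0) i = 3 * ind f i"
        unfolding ind_def addf_def by simp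
    qed simp
    have "card {i\<in>I'. f i \<noteq> 0} = (\<Sum>i\<in>I'. ind f i)" unfolding ind_def using fS by (simp add: ind_card)
    then show ?thesis using S2 I3 cardS unfolding e by (simp add: sum.distrib sum_distrib_left[symmetric])
  qed
  define res where "res f = (\<lambda>i. if i \<in> I' then f i else (0::int))" for f
  define C' where "C' = res ` C"
  have addC: "addf f c0 \<in> C" "addf (addf f c0) c0 \<in> C" if "f \<in> C" for f
    using addc that c0(1) by auto
  have res_add: "res (addf f c0) = res f" "res (addf (addf f c0) c0) = res f" if "f \<in> C" for f
  proof -
    have fv: "f i \<in> {0,1,2}" for i using vals that by auto
    have fm: "f i mod 3 = f i" for i using fv[of i] by auto
    show "res (addf f c0) = res f" unfolding res_def addf_def
      using c0I' fm by (auto intro!: ext)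
    show "res (addf (addf f c0) c0) = res f" unfolding res_def addf_def
      using c0I' fm by (auto intro!: ext)
  qed
  have wt_res: "card {i\<in>I'. f i \<noteq> 0} = card {i\<in>I'. res f i \<noteq> 0}" for f
    unfolding res_def by (rule arg_cong[where f=card]) auto
  have kernel: "f = (\<lambda>_. 0) \<or> addf f c0 = (\<lambda>_. 0) \<or> addf (addf f c0) c0 = (\<lambda>_. 0)"
    if "f \<in> C" "res f = (\<lambda>_. 0)" for f
  proof (rule ccontr)
    assume "\<not> ?thesis"
    then have "w0 \<le> wtf f" "w0 \<le> wtf (addf f c0)" "w0 \<le> wtf (addf (addf f c0) c0)"
      using minw addC that(1) by auto
    moreover have "card {i\<in>I'. f i \<noteq> 0} = 0" using wt_res[of f] that(2) by simp
    ultimately show False using KI[OF that(1)] w0pos by linarith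
  qed
  have fiber: "{h\<in>C. res h = res f} \<subseteq> {f, addf f c0, addf (addf f c0) c0}" if "f \<in> C" for f
  proof
    fix h assume h: "h \<in> {h\<in>C. res h = res f}"
    define z where "z = addf (addf h f) f"
    have zC: "z \<in> C" unfolding z_def using addc h that by auto
    have hv: "h i \<in> {0,1,2}" "f i \<in> {0,1,2}" "c0 i \<in> {0,1,2}" for i using vals h that c0(1) by auto
    have "res z = (\<lambda>_. 0)"
    proof
      fix i show "res z i = 0"
      proof (cases "i \<in> I'")
        case True
        from h have "res h i = res f i" by simp
        with True have "h i = f i" unfolding res_def by simp
        then show ?thesis using True m3d[OF hv(2)[of i]] unfolding res_def z_def addf_def by simp
      qed (simp add: res_def)
    qed
    from kernel[OF zC this] have "\<exists>k\<in>{0,1,2::int}. \<forall>i. (z i + k * c0 i) mod 3 = 0"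
    proof (elim disjE)
      assume "z = (\<lambda>_. 0)" then show ?thesis by (intro bexI[of _ 0]) auto
    next
      assume a: "addf z c0 = (\<lambda>_. 0)"
      show ?thesis
      proof (intro bexI[of _ 1] allI)
        fix i from fun_cong[OF a, of i] show "(z i + 1 * c0 i) mod 3 = 0" unfolding addf_def by simp
      qed simp
    next
      assume a: "addf (addf z c0) c0 = (\<lambda>_. 0)"
      show ?thesis
      proof (intro bexI[of _ 2] allI)
        fix i
        have e: "((z i + c0 i) mod 3 + c0 i) mod 3 = (z i + 2 * c0 i) mod 3"
          unfolding mod_add_left_eq by (simp add: algebra_simps)
        from fun_cong[OF a, of i] show "(z i + 2 * c0 i) mod 3 = 0" unfolding addf_def e by simp
      qed simp
    qed
    then obtain k where k: "k \<in> {0,1,2}" "\<And>i. (z i + k * c0 i) mod 3 = 0" by blast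
    have zi: "z i = ((h i + f i) mod 3 + f i) mod 3" for i unfolding z_def addf_def by simp
    show "h \<in> {f, addf f c0, addf (addf f c0) c0}"
    proof -
      have "k = 0 \<or> k = 1 \<or> k = 2" using k(1) by auto
      then show ?thesis
      proof (elim disjE)
        assume k0: "k = 0"
        have "h = f"
        proof
          fix i show "h i = f i" using k(2)[of i] unfolding zi k0 by (rule m3a[OF hv(1)[of i] hv(2)[of i], of "c0 i"])
        qed
        then show ?thesis by simp
      next
        assume k1: "k = 1"
        have "h = addf (addf f c0) c0"
        proof
          fix i show "h i = addf (addf f c0) c0 i" using k(2)[of i] unfolding zi k1 addf_def by (rule m3b[OF hv(1)[of i] hv(2)[of i] hv(3)[of i]])
        qed
        then show ?thesis by simp
      next
        assume k2: "k = 2"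
        have "h = addf f c0"
        proof
          fix i show "h i = addf f c0 i" using k(2)[of i] unfolding zi k2 addf_def by (rule m3c[OF hv(1)[of i] hv(2)[of i] hv(3)[of i]])
        qed
        then show ?thesis by simp
      qed
    qed
  qed
  have cardle: "card C \<le> 3 * card C'"
  proof -
    have "C = (\<Union>g\<in>C'. {h\<in>C. res h = g})" unfolding C'_def by auto
    moreover have "finite C'" unfolding C'_def using fC by simp
    ultimately have "card C \<le> (\<Sum>g\<in>C'. card {h\<in>C. res h = g})"
      using card_UN_le[of C' "\<lambda>g. {h\<in>C. res h = g}"] by simp
    also have "\<dots> \<le> (\<Sum>g\<in>C'. 3)"
    proof (rule sum_mono)
      fix g assume "g \<in> C'"
      then obtain f where f: "f \<in> C" "g = res f" unfolding C'_def by auto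
      have "card {h\<in>C. res h = g} \<le> card {f, addf f c0, addf (addf f c0) c0}"
        using fiber[OF f(1)] f(2) by (intro card_mono) auto
      also have "\<dots> \<le> 3" by (simp add: card_insert_le_m1 card_insert_if)
      finally show "card {h\<in>C. res h = g} \<le> 3" .
    qed
    finally show ?thesis by simp
  qed
  have cardC': "3^K \<le> card C'" using cardC cardle by simp
  have wt': "(d + 2) div 3 \<le> card {i\<in>I'. g i \<noteq> 0}" if gC: "g \<in> C'" "g \<noteq> (\<lambda>_. 0)" for g
  proof -
    obtain f where f: "f \<in> C" "g = res f" using gC(1) unfolding C'_def by blast
    have nz: "f \<noteq> (\<lambda>_. 0)" "addf f c0 \<noteq> (\<lambda>_. 0)" "addf (addf f c0) c0 \<noteq> (\<lambda>_. 0)"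
    proof -
      obtain i where gi: "g i \<noteq> 0" using gC(2) by auto
      have r1: "res f i \<noteq> 0" using gi f(2) by simp
      have r2: "res (addf f c0) i \<noteq> 0" using r1 res_add(1)[OF f(1)] by simp
      have r3: "res (addf (addf f c0) c0) i \<noteq> 0" using r1 res_add(2)[OF f(1)] by simp
      show "f \<noteq> (\<lambda>_. 0)" using r1 unfolding res_def by (auto split: if_splits)
      show "addf f c0 \<noteq> (\<lambda>_. 0)" using r2 unfolding res_def by (auto split: if_splits)
      show "addf (addf f c0) c0 \<noteq> (\<lambda>_. 0)" using r3 unfolding res_def by (auto split: if_splits)
    qed
    have "w0 \<le> wtf f" "w0 \<le> wtf (addf f c0)" "w0 \<le> wtf (addf (addf f c0) c0)"
      using minw addC f(1) nz by auto
    then have "3 * w0 \<le> 2 * w0 + 3 * card {i\<in>I'. f i \<noteq> 0}" using KI[OF f(1)] by linarith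
    moreover have "card {i\<in>I'. f i \<noteq> 0} = card {i\<in>I'. g i \<noteq> 0}" using wt_res[of f] f(2) by simp
    ultimately have "d \<le> 3 * card {i\<in>I'. g i \<noteq> 0}" using dw0 by linarith
    then show ?thesis by linarith
  qed
  have IH: "grs K ((d + 2) div 3) \<le> card I'"
  proof (rule Suc.IH[OF fS(2)])
    show "finite C'" unfolding C'_def using fC by simp
    show "\<forall>f\<in>C'. \<forall>i. (i \<notin> I' \<longrightarrow> f i = 0) \<and> f i \<in> {0, 1, 2}"
      unfolding C'_def res_def using vals by auto
    show "(\<lambda>_. 0) \<in> C'" unfolding C'_def res_def using zero by (auto intro!: image_eqI[of _ _ "\<lambda>_. 0"])
    show "\<forall>f\<in>C'. \<forall>h\<in>C'. addf f h \<in> C'"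
    proof (intro ballI)
      fix f h assume "f \<in> C'" "h \<in> C'"
      then obtain f1 h1 where "f1 \<in> C" "h1 \<in> C" "f = res f1" "h = res h1" unfolding C'_def by auto
      moreover have "addf (res f1) (res h1) = res (addf f1 h1)" unfolding res_def addf_def by auto
      ultimately show "addf f h \<in> C'" unfolding C'_def using addc by auto
    qed
    show "3^K \<le> card C'" by (rule cardC')
    show "\<forall>f\<in>C'. f \<noteq> (\<lambda>_. 0) \<longrightarrow> (d + 2) div 3 \<le> card {i \<in> I'. f i \<noteq> 0}" using wt' by auto
  qed
  have "card I = w0 + card I'" using IS fS cardS by (simp add: card_Un_disjoint)
  then show ?case using IH dw0 by simp
qed



definition lc :: "nat \<Rightarrow> int list \<Rightarrow> int list list \<Rightarrow> int list" where
  "lc n cs B = foldr ter_add (map2 ter_smult cs B) (replicate n 0)"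

lemma lc_Nil: "lc n [] [] = replicate n 0" by (simp add: lc_def)
lemma lc_Cons: "lc n (c#cs) (v#B) = ter_add (ter_smult c v) (lc n cs B)" by (simp add: lc_def)

lemma ter_add_length: "length (ter_add v w) = min (length v) (length w)"
  by (simp add: ter_add_def)
lemma ter_add_nth: "j < length v \<Longrightarrow> j < length w \<Longrightarrow> ter_add v w ! j = (v!j + w!j) mod 3"
  by (simp add: ter_add_def)
lemma ter_smult_length: "length (ter_smult c v) = length v" by (simp add: ter_smult_def)
lemma ter_smult_nth: "j < length v \<Longrightarrow> ter_smult c v ! j = (c * v!j) mod 3" by (simp add: ter_smult_def)

lemma lc_props:
  "length cs = length B \<Longrightarrow> \<forall>v\<in>set B. length v = n \<Longrightarrow>
     length (lc n cs B) = n \<and> (\<forall>j<n. lc n cs B ! j = (\<Sum>i<length B. cs!i * (B!i!j)) mod 3)"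
proof (induction B arbitrary: cs)
  case Nil
  then show ?case by (simp add: lc_Nil)
next
  case (Cons v B)
  then obtain c cs' where cs: "cs = c # cs'" by (cases cs) auto
  have IH: "length (lc n cs' B) = n \<and> (\<forall>j<n. lc n cs' B ! j = (\<Sum>i<length B. cs'!i * (B!i!j)) mod 3)"
    using Cons cs by simp
  have lv: "length v = n" using Cons.prems by simp
  show ?case
  proof (intro conjI allI impI)
    show "length (lc n cs (v # B)) = n" unfolding cs lc_Cons using IH lv by (simp add: ter_add_length ter_smult_length)
    fix j assume j: "j < n"
    have "lc n cs (v # B) ! j = ((c * v!j) mod 3 + (\<Sum>i<length B. cs'!i * (B!i!j)) mod 3) mod 3"
      unfolding cs lc_Cons using IH lv j by (simp add: ter_add_nth ter_smult_length ter_smult_nth)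
    also have "\<dots> = (c * v!j + (\<Sum>i<length B. cs'!i * (B!i!j))) mod 3" by (simp add: mod_add_eq)
    also have "\<dots> = (\<Sum>i<length (v#B). cs!i * ((v#B)!i!j)) mod 3"
      unfolding cs by (simp add: sum.lessThan_Suc_shift del: sum.lessThan_Suc)
    finally show "lc n cs (v # B) ! j = (\<Sum>i<length (v#B). cs!i * ((v#B)!i!j)) mod 3" .
  qed
qed

lemma span_eq: "ter_span n B = (\<lambda>cs. lc n cs B) ` {cs. set cs \<subseteq> {0,1,2} \<and> length cs = length B}"
  unfolding ter_span_def lc_def by auto

lemma span_card: "card (ter_span n B) \<le> 3 ^ length B"
proof -
  have "card (ter_span n B) \<le> card {cs. set cs \<subseteq> {0,1,2::int} \<and> length cs = length B}"
    unfolding span_eq by (rule card_image_le) (simp add: finite_lists_length_eq)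
  also have "\<dots> = 3 ^ length B" by (simp add: card_lists_length_eq numeral_3_eq_3)
  finally show ?thesis .
qed

lemma span_Nil: "ter_span n [] = {replicate n 0}"
  unfolding span_eq by (auto simp: lc_Nil)

lemma span_Cons: "ter_span n (v#B) = (\<lambda>(c,w). ter_add (ter_smult c v) w) ` ({0,1,2} \<times> ter_span n B)"
  unfolding span_eq
proof (rule Set.set_eqI, rule iffI)
  fix x assume "x \<in> (\<lambda>cs. lc n cs (v#B)) ` {cs. set cs \<subseteq> {0,1,2} \<and> length cs = length (v#B)}"
  then obtain cs where cs: "set cs \<subseteq> {0,1,2}" "length cs = Suc (length B)" "x = lc n cs (v#B)" by auto
  then obtain c cs' where "cs = c#cs'" by (cases cs) auto
  with cs show "x \<in> (\<lambda>(c,w). ter_add (ter_smult c v) w) ` ({0,1,2} \<times> (\<lambda>cs. lc n cs B) ` {cs. set cs \<subseteq> {0,1,2} \<and> length cs = length B})"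
    by (intro image_eqI[of _ _ "(c, lc n cs' B)"]) (auto simp: lc_Cons)
next
  fix x assume "x \<in> (\<lambda>(c,w). ter_add (ter_smult c v) w) ` ({0,1,2} \<times> (\<lambda>cs. lc n cs B) ` {cs. set cs \<subseteq> {0,1,2} \<and> length cs = length B})"
  then obtain c cs' where c: "c \<in> {0,1,2}" "set cs' \<subseteq> {0,1,2}" "length cs' = length B" "x = ter_add (ter_smult c v) (lc n cs' B)"
    by auto
  then show "x \<in> (\<lambda>cs. lc n cs (v#B)) ` {cs. set cs \<subseteq> {0,1,2} \<and> length cs = length (v#B)}"
    by (intro image_eqI[of _ _ "c#cs'"]) (auto simp: lc_Cons)
qed

lemma linear_code_finite: "ternary_linear_code n C \<Longrightarrow> finite C"
  unfolding ternary_linear_code_def ter_words_def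
  by (rule finite_subset[of _ "{xs. set xs \<subseteq> {0,1,2::int} \<and> length xs = n}"])
     (auto simp: finite_lists_length_eq)

lemma span_sub: "ternary_linear_code n C \<Longrightarrow> set B \<subseteq> C \<Longrightarrow> ter_span n B \<subseteq> C"
proof (induction B)
  case Nil
  then show ?case by (simp add: span_Nil ternary_linear_code_def)
next
  case (Cons v B)
  then have "ter_span n B \<subseteq> C" "v \<in> C" by auto
  then show ?case unfolding span_Cons using Cons.prems(1) unfolding ternary_linear_code_def by auto
qed

lemma mod_sum_mult: "(\<Sum>i\<in>A. (x i mod 3) * y i) mod 3 = (\<Sum>i\<in>A. x i * y i) mod (3::int)"
proof -
  have "(\<Sum>i\<in>A. (x i mod 3) * y i) mod 3 = (\<Sum>i\<in>A. ((x i mod 3) * y i) mod 3) mod 3"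
    by (simp add: mod_sum_eq)
  also have "\<dots> = (\<Sum>i\<in>A. (x i * y i) mod 3) mod 3" by (simp add: mod_mult_left_eq)
  also have "\<dots> = (\<Sum>i\<in>A. x i * y i) mod 3" by (simp add: mod_sum_eq)
  finally show ?thesis .
qed

lemma modlin3: "(a * S + b * S') mod 3 = (a * (S mod 3) + b * (S' mod 3)) mod (3::int)"
proof -
  have "(a * (S mod 3) + b * (S' mod 3)) mod 3 = ((a * (S mod 3)) mod 3 + (b * (S' mod 3)) mod 3) mod 3"
    by (rule mod_add_eq[symmetric])
  also have "\<dots> = ((a * S) mod 3 + (b * S') mod 3) mod 3" by (simp only: mod_mult_right_eq)
  also have "\<dots> = (a * S + b * S') mod 3" by (rule mod_add_eq)
  finally show ?thesis by simp
qed

lemma span_lin: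
  assumes lB: "\<forall>v\<in>set B. length v = n" and w: "w \<in> ter_span n B" and w': "w' \<in> ter_span n B"
  shows "map (\<lambda>j. (a * w!j + b * w'!j) mod 3) [0..<n] \<in> ter_span n B"
proof -
  obtain cs where cs: "set cs \<subseteq> {0,1,2}" "length cs = length B" "w = lc n cs B" using w unfolding span_eq by auto
  obtain cs' where cs': "set cs' \<subseteq> {0,1,2}" "length cs' = length B" "w' = lc n cs' B" using w' unfolding span_eq by auto
  define ds where "ds = map (\<lambda>i. (a * cs!i + b * cs'!i) mod 3) [0..<length B]"
  have ds: "set ds \<subseteq> {0,1,2}" "length ds = length B"
    unfolding ds_def by auto
  have P: "length (lc n ds B) = n \<and> (\<forall>j<n. lc n ds B ! j = (\<Sum>i<length B. ds!i * (B!i!j)) mod 3)"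
    using lc_props[OF ds(2) lB] .
  have Pw: "length w = n \<and> (\<forall>j<n. w ! j = (\<Sum>i<length B. cs!i * (B!i!j)) mod 3)"
    using lc_props[OF cs(2) lB] cs(3) by simp
  have Pw': "length w' = n \<and> (\<forall>j<n. w' ! j = (\<Sum>i<length B. cs'!i * (B!i!j)) mod 3)"
    using lc_props[OF cs'(2) lB] cs'(3) by simp
  have "map (\<lambda>j. (a * w!j + b * w'!j) mod 3) [0..<n] = lc n ds B"
  proof (rule nth_equalityI)
    show "length (map (\<lambda>j. (a * w!j + b * w'!j) mod 3) [0..<n]) = length (lc n ds B)" using P by simp
    fix j assume "j < length (map (\<lambda>j. (a * w!j + b * w'!j) mod 3) [0..<n])"
    then have j: "j < n" by simp
    define S where "S = (\<Sum>i<length B. cs!i * (B!i!j))"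
    define S' where "S' = (\<Sum>i<length B. cs'!i * (B!i!j))"
    have "lc n ds B ! j = (\<Sum>i<length B. ((a * cs!i + b * cs'!i) mod 3) * (B!i!j)) mod 3"
      using P j unfolding ds_def by simp
    also have "\<dots> = (\<Sum>i<length B. (a * cs!i + b * cs'!i) * (B!i!j)) mod 3" by (rule mod_sum_mult)
    also have "\<dots> = (a * S + b * S') mod 3"
      unfolding S_def S'_def by (simp add: algebra_simps sum.distrib sum_distrib_left)
    also have "\<dots> = (a * (S mod 3) + b * (S' mod 3)) mod 3"
      by (rule modlin3)
    finally show "map (\<lambda>j. (a * w!j + b * w'!j) mod 3) [0..<n] ! j = lc n ds B ! j"
      using Pw Pw' j unfolding S_def S'_def by simp
  qed
  then show ?thesis unfolding span_eq using ds by auto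
qed

lemma cancel3: "w \<in> {0,1,2::int} \<Longrightarrow> w' \<in> {0,1,2} \<Longrightarrow> (x + w) mod 3 = (x + w') mod 3 \<Longrightarrow> w = w'"
proof -
  assume a: "w \<in> {0,1,2::int}" "w' \<in> {0,1,2}" "(x + w) mod 3 = (x + w') mod 3"
  define r where "r = x mod 3"
  have r: "r \<in> {0,1,2}" unfolding r_def by auto
  have "(r + w) mod 3 = (r + w') mod 3" using a(3) unfolding r_def by (simp add: mod_add_left_eq)
  then show ?thesis using r a(1,2) by auto
qed

lemma solve3: "c \<in> {0,1,2::int} \<Longrightarrow> c' \<in> {0,1,2} \<Longrightarrow> c \<noteq> c' \<Longrightarrow> v \<in> {0,1,2} \<Longrightarrow> w \<in> {0,1,2} \<Longrightarrow> w' \<in> {0,1,2}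
   \<Longrightarrow> ((c*v) mod 3 + w) mod 3 = ((c'*v) mod 3 + w') mod 3 \<Longrightarrow> v = ((c-c')*w' + (-(c-c'))*w) mod 3"
  by auto

lemma words_nth: "w \<in> ter_words n \<Longrightarrow> j < n \<Longrightarrow> w ! j \<in> {0,1,2}"
proof -
  assume a: "w \<in> ter_words n" "j < n"
  then have "w ! j \<in> set w" unfolding ter_words_def by simp
  then show ?thesis using a(1) unfolding ter_words_def by blast
qed

lemma card_span_Cons:
  assumes lin: "ternary_linear_code n C" and B: "set B \<subseteq> C" and v: "v \<in> C" "v \<notin> ter_span n B"
  shows "card (ter_span n (v#B)) = 3 * card (ter_span n B)"
proof -
  have CW: "C \<subseteq> ter_words n" using lin unfolding ternary_linear_code_def by simp
  have SB: "ter_span n B \<subseteq> C" using span_sub[OF lin B] .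
  have lB: "\<forall>u\<in>set B. length u = n" using B CW unfolding ter_words_def by auto
  have vw: "v \<in> ter_words n" using v CW by auto
  have fin: "finite (ter_span n B)" using SB linear_code_finite[OF lin] finite_subset by blast
  have inj: "inj_on (\<lambda>(c,w). ter_add (ter_smult c v) w) ({0,1,2} \<times> ter_span n B)"
  proof (rule inj_onI, clarify)
    fix c w c' w' assume c: "c \<in> {0,1,2}" "c' \<in> {0,1,2}" and w: "w \<in> ter_span n B" "w' \<in> ter_span n B"
      and eq: "ter_add (ter_smult c v) w = ter_add (ter_smult c' v) w'"
    have ww: "w \<in> ter_words n" "w' \<in> ter_words n" using w SB CW by auto
    have lens: "length v = n" "length w = n" "length w' = n" using vw ww unfolding ter_words_def by auto
    have eqj: "((c * v!j) mod 3 + w!j) mod 3 = ((c' * v!j) mod 3 + w'!j) mod 3" if "j < n" for j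
    proof -
      have "ter_add (ter_smult c v) w ! j = ter_add (ter_smult c' v) w' ! j" using eq by simp
      then show ?thesis using that lens by (simp add: ter_add_nth ter_smult_nth ter_smult_length)
    qed
    show "c = c' \<and> w = w'"
    proof (cases "c = c'")
      case True
      have "w = w'"
      proof (rule nth_equalityI)
        show "length w = length w'" using lens by simp
        fix j assume "j < length w"
        then have j: "j < n" using lens by simp
        show "w ! j = w' ! j" using cancel3[OF words_nth[OF ww(1) j] words_nth[OF ww(2) j]] eqj[OF j] True by simp
      qed
      then show ?thesis using True by simp
    next
      case False
      define d where "d = c - c'"
      have "map (\<lambda>j. (d * w'!j + (-d) * w!j) mod 3) [0..<n] \<in> ter_span n B"
        by (rule span_lin[OF lB w(2) w(1)])
      moreover have "map (\<lambda>j. (d * w'!j + (-d) * w!j) mod 3) [0..<n] = v"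
      proof (rule nth_equalityI)
        show "length (map (\<lambda>j. (d * w'!j + (-d) * w!j) mod 3) [0..<n]) = length v" using lens by simp
        fix j assume "j < length (map (\<lambda>j. (d * w'!j + (-d) * w!j) mod 3) [0..<n])"
        then have j: "j < n" by simp
        show "map (\<lambda>j. (d * w'!j + (-d) * w!j) mod 3) [0..<n] ! j = v ! j"
          using solve3[OF c False words_nth[OF vw j] words_nth[OF ww(1) j] words_nth[OF ww(2) j] eqj[OF j]] j
          unfolding d_def by simp
      qed
      ultimately show ?thesis using v(2) by simp
    qed
  qed
  have "card (ter_span n (v#B)) = card ({0,1,2::int} \<times> ter_span n B)"
    unfolding span_Cons by (rule card_image[OF inj])
  also have "\<dots> = 3 * card (ter_span n B)" using fin by (simp add: card_cartesian_product)
  finally show ?thesis .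
qed

lemma basis_exists:
  assumes lin: "ternary_linear_code n C"
  shows "\<exists>B. set B \<subseteq> C \<and> ter_span n B = C \<and> card C = 3 ^ length B"
proof -
  have finC: "finite C" by (rule linear_code_finite[OF lin])
  have main: "set B \<subseteq> C \<Longrightarrow> card (ter_span n B) = 3 ^ length B \<Longrightarrow>
      \<exists>B. set B \<subseteq> C \<and> ter_span n B = C \<and> card C = 3 ^ length B" for B
  proof (induction "card C - card (ter_span n B)" arbitrary: B rule: less_induct)
    case (less B)
    have SB: "ter_span n B \<subseteq> C" using span_sub[OF lin less.prems(1)] .
    show ?case
    proof (cases "ter_span n B = C")
      case True
      then show ?thesis using less.prems by auto
    next
      case False
      then obtain v where v: "v \<in> C" "v \<notin> ter_span n B" using SB by auto
      have c3: "card (ter_span n (v#B)) = 3 * card (ter_span n B)"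
        by (rule card_span_Cons[OF lin less.prems(1) v])
      have SB': "ter_span n (v#B) \<subseteq> C" using span_sub[OF lin] less.prems(1) v(1) by simp
      have le: "card (ter_span n (v#B)) \<le> card C" using card_mono[OF finC SB'] .
      have pos: "card (ter_span n B) > 0" using less.prems(2) by simp
      have "card C - card (ter_span n (v#B)) < card C - card (ter_span n B)"
        using c3 le pos by linarith
      moreover have "set (v#B) \<subseteq> C" using less.prems(1) v(1) by simp
      moreover have "card (ter_span n (v#B)) = 3 ^ length (v#B)" using c3 less.prems(2) by simp
      ultimately show ?thesis using less.hyps by blast
    qed
  qed
  show ?thesis by (rule main[of "[]"]) (auto simp: span_Nil)
qed

lemma dim_card:
  assumes lin: "ternary_linear_code n C"
  shows "card C = 3 ^ ter_dim n C"
proof -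
  obtain B where B: "set B \<subseteq> C" "ter_span n B = C" "card C = 3 ^ length B"
    using basis_exists[OF lin] by blast
  have ex: "\<exists>B. set B \<subseteq> C \<and> length B = length B \<and> ter_span n B = C" using B by blast
  have le: "ter_dim n C \<le> length B" unfolding ter_dim_def
    by (rule Least_le) (use B in blast)
  obtain B' where B': "set B' \<subseteq> C" "length B' = ter_dim n C" "ter_span n B' = C"
    unfolding ter_dim_def using LeastI_ex[of "\<lambda>k. \<exists>B. set B \<subseteq> C \<and> length B = k \<and> ter_span n B = C"] ex by blast
  have "card C \<le> 3 ^ ter_dim n C" using span_card[of n B'] B' by simp
  moreover have "3 ^ ter_dim n C \<le> card C" using B(3) le by simp
  ultimately show ?thesis by simp
qed



lemma griesmer_list:
  assumes lin: "ternary_linear_code n C" and K: "3^K \<le> card C"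
    and d: "\<forall>v\<in>C. \<forall>w\<in>C. v \<noteq> w \<longrightarrow> d \<le> hamming v w"
  shows "grs K d \<le> n"
proof -
  have CW: "C \<subseteq> ter_words n" using lin unfolding ternary_linear_code_def by simp
  have len: "w \<in> C \<Longrightarrow> length w = n" for w using CW unfolding ter_words_def by auto
  define tof where "tof w = (\<lambda>i. if i < n then w!i else (0::int))" for w :: "int list"
  define F where "F = tof ` C"
  have inj: "inj_on tof C"
  proof (rule inj_onI)
    fix v w assume vw: "v \<in> C" "w \<in> C" "tof v = tof w"
    show "v = w"
    proof (rule nth_equalityI)
      show "length v = length w" using len vw by simp
      fix i assume "i < length v"
      then show "v ! i = w ! i" using fun_cong[OF vw(3), of i] len[OF vw(1)] unfolding tof_def by simp
    qed
  qed
  have zC: "replicate n 0 \<in> C" using lin unfolding ternary_linear_code_def by simp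
  have "grs K d \<le> card {..<n}"
  proof (rule griesmer)
    show "finite {..<n}" by simp
    show "finite F" unfolding F_def using linear_code_finite[OF lin] by simp
    show "\<forall>f\<in>F. \<forall>i. (i \<notin> {..<n} \<longrightarrow> f i = 0) \<and> f i \<in> {0, 1, 2}"
      unfolding F_def tof_def using words_nth CW by auto
    show "(\<lambda>_. 0) \<in> F" unfolding F_def
      by (rule image_eqI[OF _ zC]) (auto simp: tof_def)
    show "\<forall>f\<in>F. \<forall>h\<in>F. addf f h \<in> F"
    proof (intro ballI)
      fix f h assume "f \<in> F" "h \<in> F"
      then obtain v w where vw: "v \<in> C" "w \<in> C" "f = tof v" "h = tof w" unfolding F_def by auto
      have "addf f h = tof (ter_add v w)"
        using len[OF vw(1)] len[OF vw(2)] unfolding vw tof_def addf_def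
        by (auto simp: ter_add_nth)
      moreover have "ter_add v w \<in> C" using lin vw unfolding ternary_linear_code_def by simp
      ultimately show "addf f h \<in> F" unfolding F_def by simp
    qed
    show "3^K \<le> card F" unfolding F_def using card_image[OF inj] K by simp
    show "\<forall>f\<in>F. f \<noteq> (\<lambda>_. 0) \<longrightarrow> d \<le> card {i \<in> {..<n}. f i \<noteq> 0}"
    proof (intro ballI impI)
      fix f assume f: "f \<in> F" "f \<noteq> (\<lambda>_. 0)"
      then obtain w where w: "w \<in> C" "f = tof w" unfolding F_def by auto
      have "w \<noteq> replicate n 0" using f(2) w(2) unfolding tof_def by auto
      then have "d \<le> hamming w (replicate n 0)" using d w(1) zC by blast
      also have "hamming w (replicate n 0) = card {i \<in> {..<n}. f i \<noteq> 0}"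
        unfolding hamming_def w(2) tof_def using len[OF w(1)] by (intro arg_cong[where f=card]) auto
      finally show "d \<le> card {i \<in> {..<n}. f i \<noteq> 0}" .
    qed
  qed
  then show ?thesis by simp
qed

lemma min_dist_le:
  assumes lin: "ternary_linear_code n C" and K: "3^K \<le> card C" and lt: "n < grs K (D + 1)"
  shows "min_dist C \<le> D"
proof (rule ccontr)
  assume "\<not> min_dist C \<le> D"
  then have gt: "D < min_dist C" by simp
  define P where "P = {hamming v w | v w. v \<in> C \<and> w \<in> C \<and> v \<noteq> w}"
  have finP: "finite P"
  proof -
    have "P \<subseteq> (\<lambda>(v,w). hamming v w) ` (C \<times> C)" unfolding P_def by auto
    moreover have "finite (C \<times> C)" using linear_code_finite[OF lin] by simp
    ultimately show ?thesis using finite_subset by blast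
  qed
  have "\<forall>v\<in>C. \<forall>w\<in>C. v \<noteq> w \<longrightarrow> D + 1 \<le> hamming v w"
  proof (intro ballI impI)
    fix v w assume "v \<in> C" "w \<in> C" "v \<noteq> w"
    then have "hamming v w \<in> P" unfolding P_def by blast
    then have "Min P \<le> hamming v w" using finP by simp
    then show "D + 1 \<le> hamming v w" using gt unfolding min_dist_def P_def by simp
  qed
  from griesmer_list[OF lin K this] lt show False by simp
qed

lemma grs_P1: "grs (Suc s + r) (3^s * b + 1) = (\<Sum>i\<le>s. 3^i * b + 1) + grs r ((b + 3) div 3)"
proof (induction s)
  case 0
  then show ?case by (simp add: add.commute)
next
  case (Suc s)
  have "(3 ^ Suc s * b + 1 + 2) div 3 = 3^s * b + 1" by simp
  then show ?case using Suc by simp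
qed

lemma grs_P2: "2 * grs r (c * 3^r) + 3 * c = c * 3^(r+1)"
proof (induction r)
  case 0
  then show ?case by simp
next
  case (Suc r)
  have "(c * 3 ^ Suc r + 2) div 3 = c * 3^r" by simp
  then show ?case using Suc by simp
qed

lemma geom3: "2 * (\<Sum>i\<le>s. (3::nat)^i) + 1 = 3^(s+1)"
  by (induction s) auto

lemma sum_split3: "(\<Sum>i\<le>s. 3^i * b + 1) = b * (\<Sum>i\<le>s. (3::nat)^i) + (s + 1)"
  by (induction s) (auto simp: algebra_simps)

lemma grs_bound_ii:
  assumes "m > 0"
  shows "3 * (3^m)^2 * (3^m - 1) < grs (3*m) (2 * (3^m)^2 * (3^m - 1) + 1)"
proof -
  obtain p where m: "m = Suc p" using assms by (cases m) auto
  define q :: nat where "q = 3^m"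
  have q: "q = 3 * 3^p" unfolding q_def m by simp
  define b where "b = 2 * (q - 1)"
  define S where "S = (\<Sum>i\<le>2*m. (3::nat)^i)"
  have S: "2 * S + 1 = 3 * q^2" unfolding S_def using geom3[of "2*m"]
    by (simp add: q_def power_mult[symmetric] power_add mult.commute)
  have "(1::nat) \<le> 3^p" by simp
  then have "b + 3 = 3 * (2 * 3^p) + 1" unfolding b_def q by linarith
  then have bdiv: "(b + 3) div 3 = 2 * 3^p" by simp
  define g where "g = grs p (2 * 3^p)"
  have g: "2 * g + 6 = 2 * q" using grs_P2[of p 2] unfolding g_def q by simp
  have D: "2 * q^2 * (q - 1) = 3^(2*m) * b" unfolding b_def q_def by (simp add: power_mult[symmetric] mult.commute)
  have e3: "3 * m = Suc (2*m) + p" unfolding m by simp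
  have T: "grs (3*m) (2 * q^2 * (q - 1) + 1) = b * S + (2*m + 1) + g"
    unfolding D e3 grs_P1 bdiv g_def sum_split3 S_def by simp
  have q3: "q \<ge> 3" unfolding q by simp
  have SI: "2 * int S = 3 * int q^2 - 1" using arg_cong[OF S, of int] by simp
  have gI: "2 * int g = 2 * int q - 6" using arg_cong[OF g, of int] by simp
  have bI: "int b = 2 * int q - 2" using q3 unfolding b_def by (simp add: of_nat_diff)
  have "int (2 * (b * S + (2*m + 1) + g)) = int b * (2 * int S) + 4 * int m + 2 + 2 * int g"
    by (simp add: algebra_simps)
  also have "\<dots> = (2 * int q - 2) * (3 * int q^2 - 1) + 4 * int m + 2 + (2 * int q - 6)"
    by (simp only: SI gI bI)
  finally have "int (2 * (b * S + (2*m + 1) + g)) = 6 * int q^3 - 6 * int q^2 + 4 * int m - 2"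
    by (simp add: algebra_simps power2_eq_square power3_eq_cube)
  moreover have "int (2 * (3 * q^2 * (q - 1))) = 6 * int q^3 - 6 * int q^2"
    using q3 by (simp add: of_nat_diff algebra_simps power2_eq_square power3_eq_cube)
  ultimately have "2 * (3 * q^2 * (q - 1)) < 2 * (b * S + (2*m + 1) + g)" using assms by linarith
  then show ?thesis using T unfolding q_def by simp
qed

lemma grs_bound_i:
  assumes "m > 0"
  shows "3 * (3^m)^2 * (3^m - 1) < 2 * grs (3*m) ((3^m)^2 * (3^m - 1) + 1)"
proof -
  obtain p where m: "m = Suc p" using assms by (cases m) auto
  define q :: nat where "q = 3^m"
  have q: "q = 3 * 3^p" unfolding q_def m by simp
  define b where "b = q - 1"
  define S where "S = (\<Sum>i\<le>2*m. (3::nat)^i)"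
  have S: "2 * S + 1 = 3 * q^2" unfolding S_def using geom3[of "2*m"]
    by (simp add: q_def power_mult[symmetric] power_add mult.commute)
  have "(1::nat) \<le> 3^p" by simp
  then have "b + 3 = 3 * (1 * 3^p) + 2" unfolding b_def q by linarith
  then have bdiv: "(b + 3) div 3 = 1 * 3^p" by simp
  define g where "g = grs p (1 * 3^p)"
  have g: "2 * g + 3 = q" using grs_P2[of p 1] unfolding g_def q by simp
  have D: "q^2 * (q - 1) = 3^(2*m) * b" unfolding b_def q_def by (simp add: power_mult[symmetric] mult.commute)
  have e3: "3 * m = Suc (2*m) + p" unfolding m by simp
  have T: "grs (3*m) (q^2 * (q - 1) + 1) = b * S + (2*m + 1) + g"
    unfolding D e3 grs_P1 bdiv g_def sum_split3 S_def by simp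
  have q3: "q \<ge> 3" unfolding q by simp
  have SI: "2 * int S = 3 * int q^2 - 1" using arg_cong[OF S, of int] by simp
  have gI: "2 * int g = int q - 3" using arg_cong[OF g, of int] by simp
  have bI: "int b = int q - 1" using q3 unfolding b_def by (simp add: of_nat_diff)
  have "int (2 * (b * S + (2*m + 1) + g)) = int b * (2 * int S) + 4 * int m + 2 + 2 * int g"
    by (simp add: algebra_simps)
  also have "\<dots> = (int q - 1) * (3 * int q^2 - 1) + 4 * int m + 2 + (int q - 3)"
    by (simp only: SI gI bI)
  finally have "int (2 * (b * S + (2*m + 1) + g)) = 3 * int q^3 - 3 * int q^2 + 4 * int m"
    by (simp add: algebra_simps power2_eq_square power3_eq_cube)
  moreover have "int (3 * q^2 * (q - 1)) = 3 * int q^3 - 3 * int q^2"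
    using q3 by (simp add: of_nat_diff algebra_simps power2_eq_square power3_eq_cube)
  ultimately have "3 * q^2 * (q - 1) < 2 * (b * S + (2*m + 1) + g)" using assms by linarith
  then show ?thesis using T unfolding q_def by simp
qed



locale ffield =
  fixes m :: nat and ty :: "'a::{field,finite} itself"
  assumes card_F: "card (UNIV::'a set) = 3^m" and m_pos: "m > 0"
begin

lemma three0: "(3::'a) = 0"
proof -
  have pos: "CHAR('a) > 0" by (rule finite_imp_CHAR_pos) simp
  have pr: "prime CHAR('a)" by (rule prime_CHAR_semidom[OF pos])
  have "CHAR('a) dvd 3^m" using CHAR_dvd_CARD[where 'a='a] card_F by simp
  then have d: "CHAR('a) dvd 3" using pr prime_dvd_power by blast
  have "CHAR('a) \<le> 3" using dvd_imp_le[OF d] by simp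
  moreover have "CHAR('a) \<ge> 2" using pr prime_ge_2_nat by blast
  moreover have "CHAR('a) \<noteq> 2" using d by auto
  ultimately have "CHAR('a) = 3" by linarith
  then have "of_nat 3 = (0::'a)" using of_nat_CHAR[where 'a='a] by simp
  then show ?thesis by simp
qed

lemma two_neg: "(2::'a) = -1"
proof -
  have "(2::'a) + 1 = 3" by simp
  then have "(2::'a) + 1 = 0" using three0 by simp
  then show ?thesis by (simp add: eq_neg_iff_add_eq_0)
qed

lemma one_ne_neg: "(1::'a) \<noteq> -1"
proof
  assume "(1::'a) = -1"
  then have "(1::'a) + 1 = 0" by simp
  then have "(2::'a) = 0" by (simp add: one_add_one)
  then show False using two_neg by simp
qed

lemma neg_ne_zero: "(-1::'a) \<noteq> 0" by simp

lemma frob3: "(x + y)^3 = x^3 + (y::'a)^3"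
proof -
  have "(x + y)^3 = x^3 + y^3 + 3 * (x^2*y + x*y^2)"
    by (simp add: algebra_simps power2_eq_square power3_eq_cube)
  then show ?thesis using three0 by simp
qed

lemma frob: "(x + y)^(3^i) = x^(3^i) + (y::'a)^(3^i)"
proof (induction i)
  case 0 then show ?case by simp
next
  case (Suc i)
  have "(x + y)^(3^Suc i) = ((x + y)^(3^i))^3" by (simp add: power_mult[symmetric] mult.commute)
  also have "\<dots> = (x^(3^i))^3 + (y^(3^i))^3" using Suc frob3 by simp
  also have "\<dots> = x^(3^Suc i) + y^(3^Suc i)" by (simp add: power_mult[symmetric] mult.commute)
  finally show ?case .
qed

lemma fermat: "x ^ (3^m) = (x::'a)"
proof (cases "x = 0")
  case False
  have "x * (\<Prod>y\<in>UNIV-{0}. x * y) = x * x ^ (card (UNIV :: 'a set) - 1) * \<Prod>(UNIV-{0})"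
    by (simp add: prod.distrib mult_ac)
  also have "x * x ^ (card (UNIV :: 'a set) - 1) = x ^ Suc (card (UNIV :: 'a set) - 1)"
    by (subst power_Suc) auto
  also have "Suc (card (UNIV :: 'a set) - 1) = card (UNIV :: 'a set)"
    using card_F by simp
  also have "(\<Prod>y\<in>UNIV-{0}. x * y) = (\<Prod>y\<in>UNIV-{0}. y)"
    by (rule prod.reindex_bij_witness[of _ "\<lambda>y. y / x" "\<lambda>y. x * y"]) (use False in auto)
  finally show ?thesis using card_F by simp
next
  case True then show ?thesis using m_pos by simp
qed

abbreviation tr :: "'a \<Rightarrow> 'a" where "tr \<equiv> abs_tr m"

lemma tr_add: "tr (x + y) = tr x + tr y"
  unfolding abs_tr_def by (simp add: frob sum.distrib)

lemma tr_neg: "tr (- x) = - tr x"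
  unfolding abs_tr_def by (simp add: sum_negf)

lemma tr_diff: "tr (x - y) = tr x - tr y"
  using tr_add[of x "-y"] tr_neg[of y] by simp

lemma tr0: "tr 0 = 0"
  unfolding abs_tr_def by (intro sum.neutral) (simp add: zero_power)

lemma sum_cube: "finite A \<Longrightarrow> (\<Sum>i\<in>A. f i)^3 = (\<Sum>i\<in>A. (f i :: 'a)^3)"
  by (induction A rule: finite_induct) (simp_all add: frob3)

lemma tr_cube: "(tr x)^3 = tr x"
proof -
  define g where "g i = x ^ (3^i)" for i
  have "(tr x)^3 = (\<Sum>i<m. g (Suc i))"
    unfolding abs_tr_def g_def by (simp add: sum_cube power_mult[symmetric] mult.commute)
  also have "\<dots> = (\<Sum>i<m. g i)"
  proof -
    have "(\<Sum>i<m. g (Suc i)) + g 0 = (\<Sum>i<Suc m. g i)" by (simp add: sum.lessThan_Suc_shift del: sum.lessThan_Suc)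
    also have "\<dots> = (\<Sum>i<m. g i) + g m" by simp
    also have "g m = g 0" unfolding g_def using fermat by simp
    finally show ?thesis by simp
  qed
  finally show ?thesis unfolding abs_tr_def g_def .
qed

lemma tr_vals: "tr x = 0 \<or> tr x = 1 \<or> tr x = -1"
proof -
  define t where "t = tr x"
  have "t * (t - 1) * (t + 1) = 0" using tr_cube[of x] unfolding t_def
    by (simp add: algebra_simps power3_eq_cube)
  then show ?thesis unfolding t_def[symmetric] by (auto simp: eq_neg_iff_add_eq_0)
qed

lemma tr_nonzero: "\<exists>x. tr x \<noteq> 0"
proof (rule ccontr)
  assume "\<not> ?thesis"
  then have all: "\<forall>x. tr x = 0" by simp
  define p :: "'a poly" where "p = (\<Sum>i<m. monom 1 (3^i))"
  have ev: "poly p x = tr x" for x unfolding p_def abs_tr_def by (simp add: poly_sum poly_monom)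
  have cp': "coeff p k = (\<Sum>i<m. if 3^i = k then 1 else 0)" for k
    unfolding p_def by (simp add: coeff_sum coeff_monom)
  obtain m' where m': "m = Suc m'" using m_pos by (cases m) auto
  have "coeff p (3^m') = (\<Sum>i<m. if i = m' then 1 else 0)"
    unfolding cp' by (intro sum.cong) auto
  also have "\<dots> = 1" using m' by simp
  finally have pnz: "p \<noteq> 0" by auto
  have "degree p \<le> 3^m'"
  proof (rule degree_le, intro allI impI)
    fix k :: nat assume k: "3^m' < k"
    have "(3::nat)^i \<noteq> k" if "i < m" for i
    proof -
      have "(3::nat)^i \<le> 3^m'" using that m' by (intro power_increasing) auto
      then show ?thesis using k by linarith
    qed
    then show "coeff p k = 0" unfolding cp' by simp
  qed
  moreover have "card {x. poly p x = 0} \<le> degree p" by (rule card_poly_roots_bound[OF pnz])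
  moreover have "{x. poly p x = 0} = UNIV" using ev all by auto
  ultimately have "3^m \<le> (3::nat)^m'" using card_F by (metis order_trans)
  moreover have "(3::nat)^m' < 3^m" using m' by simp
  ultimately show False by linarith
qed

end


context ffield begin

lemma shift_card: assumes c: "tr c = 1" shows "card {x::'a. tr x = t + 1} = card {x. tr x = t}"
proof -
  have "(\<lambda>x. x + c) ` {x. tr x = t} = {x. tr x = t + 1}"
  proof (rule subset_antisym)
    show "(\<lambda>x. x + c) ` {x. tr x = t} \<subseteq> {x. tr x = t + 1}" using c by (auto simp: tr_add)
    show "{x. tr x = t + 1} \<subseteq> (\<lambda>x. x + c) ` {x. tr x = t}"
    proof
      fix y assume "y \<in> {x. tr x = t + 1}"
      then have "tr (y - c) = t" using c by (simp add: tr_diff)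
      then show "y \<in> (\<lambda>x. x + c) ` {x. tr x = t}" by (intro image_eqI[of _ _ "y - c"]) auto
    qed
  qed
  moreover have "inj_on (\<lambda>x. x + c) {x. tr x = t}" by (auto simp: inj_on_def)
  ultimately show ?thesis using card_image by metis
qed

lemma count_nz: "3 * card {x::'a. tr x \<noteq> 0} = 2 * 3^m"
proof -
  obtain x0 where x0: "tr x0 \<noteq> 0" using tr_nonzero by blast
  define c where "c = (if tr x0 = 1 then x0 else - x0)"
  have c: "tr c = 1" using tr_vals[of x0] x0 unfolding c_def by (auto simp: tr_neg)
  define A where "A t = {x::'a. tr x = t}" for t
  have A1: "card (A 1) = card (A 0)" using shift_card[OF c, of 0] unfolding A_def by simp
  have A2: "card (A (-1)) = card (A 1)" using shift_card[OF c, of 1] unfolding A_def by (simp add: one_add_one two_neg)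
  have fin: "finite (A t)" for t by simp
  have U: "UNIV = A 0 \<union> (A 1 \<union> A (-1))" unfolding A_def using tr_vals by auto
  have NZ: "{x. tr x \<noteq> 0} = A 1 \<union> A (-1)" unfolding A_def using tr_vals by auto
  have d1: "A 1 \<inter> A (-1) = {}" unfolding A_def using one_ne_neg by auto
  have d0: "A 0 \<inter> (A 1 \<union> A (-1)) = {}" unfolding A_def by auto
  have cU: "card (UNIV::'a set) = card (A 0) + (card (A 1) + card (A (-1)))"
    unfolding U using d0 d1 by (simp add: card_Un_disjoint)
  have cN: "card {x. tr x \<noteq> 0} = card (A 1) + card (A (-1))"
    unfolding NZ using d1 by (simp add: card_Un_disjoint)
  show ?thesis using cU cN A1 A2 card_F by simp
qed

lemma count_scaled:
  assumes t: "t \<noteq> 0" shows "card {l::'a. tr (l * t) \<noteq> 0} = card {x::'a. tr x \<noteq> 0}"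
proof -
  have "(\<lambda>l. l * t) ` {l. tr (l * t) \<noteq> 0} = {x. tr x \<noteq> 0}"
  proof (rule subset_antisym)
    show "(\<lambda>l. l * t) ` {l. tr (l * t) \<noteq> 0} \<subseteq> {x. tr x \<noteq> 0}" by auto
    show "{x. tr x \<noteq> 0} \<subseteq> (\<lambda>l. l * t) ` {l. tr (l * t) \<noteq> 0}"
    proof
      fix y assume "y \<in> {x. tr x \<noteq> 0}"
      then show "y \<in> (\<lambda>l. l * t) ` {l. tr (l * t) \<noteq> 0}" using t by (intro image_eqI[of _ _ "y / t"]) auto
    qed
  qed
  moreover have "inj_on (\<lambda>l. l * t) {l. tr (l * t) \<noteq> 0}" using t by (auto simp: inj_on_def)
  ultimately show ?thesis using card_image by metis
qed

lemma sq_card: "2 * card (nz_squares::'a set) = 3^m - 1"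
proof -
  define F where "F t = {z::'a. z^2 = t}" for t
  have U: "{z::'a. z \<noteq> 0} = (\<Union>t\<in>nz_squares. F t)"
  proof (rule subset_antisym)
    show "{z::'a. z \<noteq> 0} \<subseteq> (\<Union>t\<in>nz_squares. F t)"
    proof
      fix z :: 'a assume "z \<in> {z. z \<noteq> 0}"
      then have "z^2 \<in> nz_squares" unfolding nz_squares_def by auto
      moreover have "z \<in> F (z^2)" unfolding F_def by simp
      ultimately show "z \<in> (\<Union>t\<in>nz_squares. F t)" by blast
    qed
    show "(\<Union>t\<in>nz_squares. F t) \<subseteq> {z::'a. z \<noteq> 0}" unfolding F_def nz_squares_def by auto
  qed
  have F2: "card (F t) = 2" if tQ: "t \<in> nz_squares" for t
  proof -
    obtain a where a: "t = a^2" "a \<noteq> 0" using tQ unfolding nz_squares_def by auto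
    have "F t = {a, -a}" unfolding F_def a(1)
    proof (rule Set.set_eqI)
      fix z :: 'a
      have "z^2 = a^2 \<longleftrightarrow> z^2 - a^2 = 0" by simp
      also have "z^2 - a^2 = (z - a) * (z + a)" by (simp add: algebra_simps power2_eq_square)
      also have "(z - a) * (z + a) = 0 \<longleftrightarrow> z - a = 0 \<or> z + a = 0" by (rule mult_eq_0_iff)
      also have "\<dots> \<longleftrightarrow> z = a \<or> z = -a" by (simp add: eq_neg_iff_add_eq_0)
      finally show "z \<in> {z. z^2 = a^2} \<longleftrightarrow> z \<in> {a, -a}" by simp
    qed
    moreover have "a \<noteq> -a"
    proof
      assume "a = -a"
      then have "a + a = 0" by (simp only: eq_neg_iff_add_eq_0)
      then have "2 * a = 0" by (simp only: mult_2)
      then have "- a = 0" unfolding two_neg by simp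
      then show False using a(2) by simp
    qed
    ultimately show ?thesis by simp
  qed
  have "card {z::'a. z \<noteq> 0} = (\<Sum>t\<in>nz_squares. card (F t))"
    unfolding U by (rule card_UN_disjoint) (auto simp: F_def)
  also have "\<dots> = 2 * card (nz_squares::'a set)" using F2 by simp
  finally have "2 * card (nz_squares::'a set) = card {z::'a. z \<noteq> 0}" by simp
  also have "{z::'a. z \<noteq> 0} = UNIV - {0}" by auto
  also have "card (UNIV - {0::'a}) = 3^m - 1" using card_F by (simp add: card_Diff_singleton)
  finally show ?thesis .
qed

lemma pow4: "odd m \<Longrightarrow> (3::nat)^m = 4 * ((3^m - 3) div 4) + 3"
proof -
  assume "odd m"
  then obtain j where j: "m = 2*j + 1" by (rule oddE)
  have "(9::nat)^j mod 4 = (9 mod 4)^j mod 4" by (rule power_mod[symmetric])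
  then have "(9::nat)^j mod 4 = 1" by simp
  moreover have "(3::nat)*9^j mod 4 = (3 * (9^j mod 4)) mod 4" by (rule mod_mult_right_eq[symmetric])
  ultimately have "(3::nat)*9^j mod 4 = 3" by simp
  moreover have "(3::nat)^m = 3*9^j" unfolding j by (simp add: power_mult)
  ultimately have r: "(3::nat)^m mod 4 = 3" by simp
  define N where "N = (3::nat)^m"
  have "N = 4 * (N div 4) + N mod 4" by simp
  then have "N = 4 * (N div 4) + 3" using r unfolding N_def by simp
  then have "(N - 3) div 4 = N div 4" by linarith
  then show ?thesis using \<open>N = 4 * (N div 4) + 3\<close> unfolding N_def by simp
qed

lemma neg1_nonsq:
  assumes "odd m" shows "\<not> (\<exists>z::'a. -1 = z^2)"
proof
  assume "\<exists>z::'a. -1 = z^2"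
  then obtain z :: 'a where z: "z^2 = -1" by auto
  then have z0: "z \<noteq> 0" by auto
  define k where "k = ((3::nat)^m - 3) div 4"
  have q: "(3::nat)^m = 4 * k + 3" unfolding k_def using pow4[OF assms] .
  have e: "Suc (4*k+2) = 3^m" using q by simp
  have "z * z^(4*k+2) = z^(Suc (4*k+2))" by (simp only: power_Suc)
  also have "\<dots> = z^(3^m)" by (simp only: e)
  also have "\<dots> = z * 1" using fermat by simp
  finally have "z^(4*k+2) = 1" using z0 by simp
  moreover have "z^(4*k+2) = (z^2)^(2*k+1)"
  proof -
    have "4*k+2 = 2*(2*k+1)" by simp
    then show ?thesis by (simp only: power_mult)
  qed
  ultimately have "(-1::'a)^(2*k+1) = 1" using z by simp
  then have "(-1::'a) = 1" by simp
  then show False using one_ne_neg by simp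
qed

lemma sq_split:
  assumes "odd m" and t: "(t::'a) \<noteq> 0"
  shows "t \<in> nz_squares \<longleftrightarrow> - t \<notin> nz_squares"
proof -
  have disj: "\<not> (s \<in> nz_squares \<and> - s \<in> nz_squares)" for s :: 'a
  proof
    assume "s \<in> nz_squares \<and> - s \<in> nz_squares"
    then obtain a c where a: "s = a^2" "s \<noteq> 0" and c: "- s = c^2" unfolding nz_squares_def by auto
    then have a0: "a \<noteq> 0" by auto
    have "(c / a)^2 = c^2 / a^2" by (simp add: power_divide)
    also have "\<dots> = - s / s" using a(1) c by simp
    also have "\<dots> = -1" using a(2) by simp
    finally have "\<exists>z::'a. -1 = z^2" by (intro exI[of _ "c / a"]) simp
    then show False using neg1_nonsq[OF assms(1)] by simp
  qed
  have fin: "finite (nz_squares::'a set)" by simp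
  have sub: "nz_squares \<union> uminus ` nz_squares \<subseteq> UNIV - {0::'a}"
  proof
    fix x assume "x \<in> nz_squares \<union> uminus ` (nz_squares::'a set)"
    then have "x \<in> nz_squares \<or> - x \<in> nz_squares" by auto
    then show "x \<in> UNIV - {0::'a}" unfolding nz_squares_def by auto
  qed
  have dj: "nz_squares \<inter> uminus ` nz_squares = ({}::'a set)"
  proof (rule ccontr)
    assume "nz_squares \<inter> uminus ` nz_squares \<noteq> ({}::'a set)"
    then obtain x where "x \<in> nz_squares" "x \<in> uminus ` (nz_squares::'a set)" by blast
    then have "x \<in> nz_squares \<and> - x \<in> nz_squares" by auto
    then show False using disj by blast
  qed
  have "card (nz_squares \<union> uminus ` (nz_squares::'a set)) = card (nz_squares::'a set) + card (uminus ` (nz_squares::'a set))"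
    using dj by (simp add: card_Un_disjoint)
  also have "card (uminus ` (nz_squares::'a set)) = card (nz_squares::'a set)" by (simp add: card_image)
  also have "card (nz_squares::'a set) + card (nz_squares::'a set) = card (UNIV - {0::'a})"
    using sq_card card_F by (simp add: card_Diff_singleton)
  finally have "nz_squares \<union> uminus ` nz_squares = UNIV - {0::'a}"
    using sub by (intro card_subset_eq) auto
  then have "t \<in> nz_squares \<union> uminus ` nz_squares" using t by auto
  then have "t \<in> nz_squares \<or> - t \<in> nz_squares" by auto
  then show ?thesis using disj[of t] by blast
qed

end


definition s3 :: "'a::comm_ring_1 rtriple \<Rightarrow> 'a" where
  "s3 x = (case x of (a, b, c) \<Rightarrow> a + b + c)"

lemma s3_rmul: "s3 (rmul x y) = s3 x * s3 y"
  by (cases x; cases y) (simp add: s3_def rmul_def algebra_simps)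

lemma s3_urep: "s3 (urep x1 x2 x3) = x1"
  by (simp add: s3_def urep_def radd_def rscale_def rone_def u_minus_1_def rmul_def algebra_simps)

lemma urep_explicit: "urep x1 x2 x3 = (x1 - x2 + x3, x2 - 2 * x3, x3)"
  by (simp add: urep_def radd_def rscale_def rone_def u_minus_1_def rmul_def algebra_simps)

lemma urep_surj: "x = urep (s3 x) (fst (snd x) + 2 * snd (snd x)) (snd (snd x))"
  by (cases x) (simp add: urep_explicit s3_def algebra_simps)

context ffield begin

lemma urep3: "urep x1 x2 x3 = (x1 - x2 + x3, x2 + x3, (x3::'a))"
  unfolding urep_explicit two_neg by simp

lemma rmul_urep: "rmul (urep a b c) (urep d e f) = urep (a*d) (a*e + b*d) (a*f + b*e + (c::'a)*d)"
proof -
  have h: "\<And>x y z::'a. x = y + 3 * z \<Longrightarrow> x = y" using three0 by simp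
  show ?thesis unfolding urep3 rmul_def
    apply (simp only: prod.case prod.inject)
    apply (intro conjI)
      apply (rule h[where z = "c*f"], simp add: algebra_simps)
     apply (rule h[where z = "c*f - b*e"], simp add: algebra_simps)
    apply (rule h[where z = "c*f"], simp add: algebra_simps)
    done
qed

lemma rone_urep: "rone = urep 1 0 (0::'a)"
  unfolding urep3 rone_def by simp

lemma runits_eq: "runits = {x::'a rtriple. s3 x \<noteq> 0}"
proof (rule subset_antisym)
  show "runits \<subseteq> {x::'a rtriple. s3 x \<noteq> 0}"
  proof
    fix x :: "'a rtriple" assume "x \<in> runits"
    then obtain y where "rmul x y = rone" unfolding runits_def by auto
    then have "s3 x * s3 y = 1" using s3_rmul[of x y] by (simp add: rone_def s3_def)
    then show "x \<in> {x. s3 x \<noteq> 0}" by auto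
  qed
  show "{x::'a rtriple. s3 x \<noteq> 0} \<subseteq> runits"
  proof
    fix x :: "'a rtriple" assume "x \<in> {x. s3 x \<noteq> 0}"
    then have a: "s3 x \<noteq> 0" by simp
    define a' where "a' = s3 x"
    define b' where "b' = fst (snd x) + 2 * snd (snd x)"
    define c' where "c' = snd (snd x)"
    have x: "x = urep a' b' c'" unfolding a'_def b'_def c'_def by (rule urep_surj)
    define y where "y = urep (1 / a') (- b' / a'^2) ((b'^2 - a' * c') / a'^3)"
    have a0: "a' \<noteq> 0" using a unfolding a'_def .
    have e1: "a' * (1 / a') = 1" using a0 by simp
    have e2: "a' * (- b' / a'^2) + b' * (1 / a') = 0" using a0 by (simp add: power2_eq_square field_simps)
    have e3: "a' * ((b'^2 - a' * c') / a'^3) + b' * (- b' / a'^2) + c' * (1 / a') = 0"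
      using a0 by (simp add: power2_eq_square power3_eq_cube field_simps)
    have "rmul x y = urep 1 0 0"
      unfolding x y_def rmul_urep e1 e2 e3 ..
    then show "x \<in> runits" unfolding runits_def rone_urep by blast
  qed
qed

lemma L'_eq: "L' = {x::'a rtriple. s3 x \<in> nz_squares}"
proof (rule subset_antisym)
  show "L' \<subseteq> {x::'a rtriple. s3 x \<in> nz_squares}" unfolding L'_def by (auto simp: s3_urep)
  show "{x::'a rtriple. s3 x \<in> nz_squares} \<subseteq> L'"
  proof
    fix x :: "'a rtriple" assume "x \<in> {x. s3 x \<in> nz_squares}"
    then show "x \<in> L'" unfolding L'_def using urep_surj[of x] by blast
  qed
qed

lemma count_s: "card {x::'a rtriple. P (s3 x)} = card {t::'a. P t} * 3^m * 3^m"
proof -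
  define h where "h x = (case x of (a, b, c) \<Rightarrow> (a + b + c, b, c))" for x :: "'a rtriple"
  have img: "h ` {x. P (s3 x)} = {t. P t} \<times> (UNIV \<times> UNIV)"
  proof (rule subset_antisym)
    show "h ` {x. P (s3 x)} \<subseteq> {t. P t} \<times> (UNIV \<times> UNIV)" unfolding h_def s3_def by auto
    show "{t. P t} \<times> (UNIV \<times> UNIV) \<subseteq> h ` {x. P (s3 x)}"
    proof
      fix z :: "'a rtriple" assume "z \<in> {t. P t} \<times> (UNIV \<times> UNIV)"
      then obtain t b c where z: "z = (t, b, c)" "P t" by auto
      show "z \<in> h ` {x. P (s3 x)}"
        using z by (intro image_eqI[of _ _ "(t - b - c, b, c)"]) (auto simp: h_def s3_def)
    qed
  qed
  have inj: "inj_on h {x. P (s3 x)}"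
  proof (rule inj_onI)
    fix x y assume "x \<in> {x. P (s3 x)}" "y \<in> {x. P (s3 x)}" "h x = h y"
    then show "x = y" unfolding h_def by (cases x; cases y) auto
  qed
  have "card {x. P (s3 x)} = card (h ` {x. P (s3 x)})" using card_image[OF inj] by (rule sym)
  also have "\<dots> = card ({t. P t} \<times> ((UNIV::'a set) \<times> (UNIV::'a set)))" using img by (rule arg_cong)
  also have "\<dots> = card {t::'a. P t} * (card (UNIV::'a set) * card (UNIV::'a set))"
    by (simp only: card_cartesian_product)
  also have "\<dots> = card {t::'a. P t} * 3^m * 3^m" using card_F by simp
  finally show ?thesis .
qed

lemma card_runits: "card (runits::'a rtriple set) = (3^m - 1) * 3^m * 3^m"
proof -
  have "card {t::'a. t \<noteq> 0} = 3^m - 1"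
  proof -
    have "{t::'a. t \<noteq> 0} = UNIV - {0}" by auto
    then show ?thesis using card_F by (simp add: card_Diff_singleton)
  qed
  then show ?thesis unfolding runits_eq using count_s[of "\<lambda>t. t \<noteq> 0"] by simp
qed

lemma card_L': "2 * card (L'::'a rtriple set) = (3^m - 1) * 3^m * 3^m"
  unfolding L'_eq using count_s[of "\<lambda>t. t \<in> nz_squares"] sq_card by simp

end


definition wt3 :: "'a::zero rtriple \<Rightarrow> nat" where
  "wt3 z = (case z of (p, q, r) \<Rightarrow> (if p = 0 then 0 else 1) + (if q = 0 then 0 else 1) + (if r = 0 then 0 else 1))"

definition rot :: "'a rtriple \<Rightarrow> 'a rtriple" where
  "rot x = (case x of (a, b, c) \<Rightarrow> (c, a, b))"

lemma rmul_rot: "rmul b (rot x) = rot (rmul b x)"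
  by (cases b; cases x) (simp add: rmul_def rot_def algebra_simps)

lemma rmul_rscale: "rmul b (rscale l x) = rscale l (rmul b x)"
  by (cases b; cases x) (simp add: rmul_def rscale_def algebra_simps)

lemma s3_rot: "s3 (rot x) = s3 x"
  by (cases x) (simp add: s3_def rot_def algebra_simps)

lemma s3_rscale: "s3 (rscale l x) = l * s3 x"
  by (cases x) (simp add: s3_def rscale_def algebra_simps)

lemma reindex_card:
  assumes "inj_on f U" "f ` U = U"
  shows "card {x\<in>U. P (f x)} = card {x\<in>U. P x}"
proof -
  have "f ` {x\<in>U. P (f x)} = {x\<in>U. P x}"
  proof (rule subset_antisym)
    show "f ` {x\<in>U. P (f x)} \<subseteq> {x\<in>U. P x}" using assms(2) by auto
    show "{x\<in>U. P x} \<subseteq> f ` {x\<in>U. P (f x)}"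
    proof
      fix y assume y: "y \<in> {x\<in>U. P x}"
      then have "y \<in> f ` U" using assms(2) by simp
      then obtain x where x: "x \<in> U" "y = f x" by auto
      then show "y \<in> f ` {x\<in>U. P (f x)}" using y by auto
    qed
  qed
  moreover have "inj_on f {x\<in>U. P (f x)}" using assms(1) by (rule inj_on_subset) auto
  ultimately show ?thesis using card_image[of f "{x\<in>U. P (f x)}"] by simp
qed

context ffield begin

abbreviation U :: "'a rtriple set" where "U \<equiv> {x. s3 x \<noteq> 0}"

lemma rot_bij: "inj_on rot U" "rot ` U = U"
proof -
  show "inj_on rot U"
  proof (rule inj_onI)
    fix x y :: "'a rtriple" assume "rot x = rot y"
    then show "x = y" by (cases x; cases y) (simp add: rot_def)
  qed
  show "rot ` U = U"
  proof (rule subset_antisym)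
    show "rot ` U \<subseteq> U" by (auto simp: s3_rot)
    show "U \<subseteq> rot ` U"
    proof
      fix x :: "'a rtriple" assume x: "x \<in> U"
      obtain a b c where abc: "x = (a, b, c)" by (cases x)
      have r: "x = rot (b, c, a)" unfolding abc rot_def by simp
      have "(b, c, a) \<in> U" using x unfolding abc by (simp add: s3_def algebra_simps)
      with r show "x \<in> rot ` U" by (rule image_eqI)
    qed
  qed
qed

lemma scale_bij: assumes l: "(l::'a) \<noteq> 0" shows "inj_on (rscale l) U" "rscale l ` U = U"
proof -
  show "inj_on (rscale l) U"
  proof (rule inj_onI)
    fix x y :: "'a rtriple" assume "rscale l x = rscale l y"
    then show "x = y" using l by (cases x; cases y) (simp add: rscale_def)
  qed
  show "rscale l ` U = U"
  proof (rule subset_antisym)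
    show "rscale l ` U \<subseteq> U" using l by (auto simp: s3_rscale)
    show "U \<subseteq> rscale l ` U"
    proof
      fix x :: "'a rtriple" assume x: "x \<in> U"
      have r: "x = rscale l (rscale (1/l) x)" using l by (cases x) (simp add: rscale_def)
      have "rscale (1/l) x \<in> U" using x l by (simp add: s3_rscale)
      with r show "x \<in> rscale l ` U" by (rule image_eqI)
    qed
  qed
qed

lemma ind_sum3: "(\<Sum>x\<in>A. (if P x then 1 else 0) + (if Q x then 1 else 0) + (if R x then 1 else (0::nat)))
   = card {x\<in>A. P x} + card {x\<in>A. Q x} + card {x\<in>A. R x}" if "finite A"
  using that by (simp add: sum.distrib ind_card)

lemma W_split: "(\<Sum>x\<in>U. wt3 (Tr m (rmul b x))) =
   card {x\<in>U. tr (fst (rmul b x)) \<noteq> 0} + card {x\<in>U. tr (fst (snd (rmul b x))) \<noteq> 0}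
   + card {x\<in>U. tr (snd (snd (rmul b x))) \<noteq> 0}"
proof -
  have "(\<Sum>x\<in>U. wt3 (Tr m (rmul b x))) = (\<Sum>x\<in>U. (if tr (fst (rmul b x)) \<noteq> 0 then 1 else 0)
     + (if tr (fst (snd (rmul b x))) \<noteq> 0 then 1 else 0) + (if tr (snd (snd (rmul b x))) \<noteq> 0 then 1 else (0::nat)))"
    by (intro sum.cong) (auto simp: wt3_def Tr_def split: prod.splits)
  also have "\<dots> = card {x\<in>U. tr (fst (rmul b x)) \<noteq> 0} + card {x\<in>U. tr (fst (snd (rmul b x))) \<noteq> 0}
   + card {x\<in>U. tr (snd (snd (rmul b x))) \<noteq> 0}" by (rule ind_sum3) simp
  finally show ?thesis .
qed

lemma W_3: "(\<Sum>x\<in>U. wt3 (Tr m (rmul b x))) = 3 * card {x\<in>U. tr (fst (rmul b x)) \<noteq> 0}"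
proof -
  have r1: "fst (snd (rot z)) = fst z" "snd (snd (rot z)) = fst (snd z)" for z :: "'a rtriple"
    by (cases z; simp add: rot_def)+
  have "card {x\<in>U. tr (fst (snd (rmul b x))) \<noteq> 0} = card {x\<in>U. tr (fst (snd (rmul b (rot x)))) \<noteq> 0}"
    using reindex_card[OF rot_bij, of "\<lambda>x. tr (fst (snd (rmul b x))) \<noteq> 0"] by simp
  also have "\<dots> = card {x\<in>U. tr (fst (rmul b x)) \<noteq> 0}" by (simp add: rmul_rot r1)
  finally have e1: "card {x\<in>U. tr (fst (snd (rmul b x))) \<noteq> 0} = card {x\<in>U. tr (fst (rmul b x)) \<noteq> 0}" .
  have "card {x\<in>U. tr (snd (snd (rmul b x))) \<noteq> 0} = card {x\<in>U. tr (snd (snd (rmul b (rot x)))) \<noteq> 0}"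
    using reindex_card[OF rot_bij, of "\<lambda>x. tr (snd (snd (rmul b x))) \<noteq> 0"] by simp
  also have "\<dots> = card {x\<in>U. tr (fst (snd (rmul b x))) \<noteq> 0}" by (simp add: rmul_rot r1)
  finally have e2: "card {x\<in>U. tr (snd (snd (rmul b x))) \<noteq> 0} = card {x\<in>U. tr (fst (rmul b x)) \<noteq> 0}"
    using e1 by simp
  show ?thesis unfolding W_split e1 e2 by simp
qed

lemma N0_scale: assumes l: "(l::'a) \<noteq> 0"
  shows "card {x\<in>U. tr (fst (rmul b x)) \<noteq> 0} = card {x\<in>U. tr (l * fst (rmul b x)) \<noteq> 0}"
proof -
  have f: "fst (rmul b (rscale l x)) = l * fst (rmul b x)" for x
    by (cases x; cases b) (simp add: rmul_def rscale_def algebra_simps)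
  show ?thesis using reindex_card[OF scale_bij[OF l], of "\<lambda>x. tr (fst (rmul b x)) \<noteq> 0"]
    by (simp add: f)
qed

lemma zero_bound:
  assumes b: "b \<noteq> (0, 0, (0::'a))"
  shows "card {x\<in>U. fst (rmul b x) = 0} \<le> 3^m * (3^m - 1)"
proof -
  obtain b0 b1 b2 where bb: "b = (b0, b1, b2)" by (cases b)
  have g: "fst (rmul b x) = b0 * fst x + b1 * snd (snd x) + b2 * fst (snd x)" for x
    unfolding bb by (cases x) (simp add: rmul_def)
  define Z where "Z = {x\<in>U. fst (rmul b x) = 0}"
  have cT: "card ({t::'a. t \<noteq> 0} \<times> (UNIV::'a set)) = (3^m - 1) * 3^m"
  proof -
    have "{t::'a. t \<noteq> 0} = UNIV - {0}" by auto
    then have "card {t::'a. t \<noteq> 0} = 3^m - 1" using card_F by (simp add: card_Diff_singleton)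
    then show ?thesis using card_F by (simp add: card_cartesian_product)
  qed
  have fT: "finite ({t::'a. t \<noteq> 0} \<times> (UNIV::'a set))" by simp
  show ?thesis
  proof (cases "b2 \<noteq> b0")
    case True
    define \<phi> where "\<phi> x = (s3 x, snd (snd x))" for x :: "'a rtriple"
    have inj: "inj_on \<phi> Z"
    proof (rule inj_onI)
      fix x y assume xy: "x \<in> Z" "y \<in> Z" "\<phi> x = \<phi> y"
      obtain x0 x1 x2 where x: "x = (x0, x1, x2)" by (cases x)
      obtain y0 y1 y2 where y: "y = (y0, y1, y2)" by (cases y)
      have gx: "b0 * x0 + b1 * x2 + b2 * x1 = 0" using xy(1) g[of x] unfolding Z_def x by simp
      have gy: "b0 * y0 + b1 * y2 + b2 * y1 = 0" using xy(2) g[of y] unfolding Z_def y by simp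
      have es: "x0 + x1 + x2 = y0 + y1 + y2" and e2: "x2 = y2"
        using xy(3) unfolding \<phi>_def x y s3_def by auto
      have "(b2 - b0) * (x1 - y1) = (b0 * x0 + b1 * x2 + b2 * x1) - (b0 * y0 + b1 * y2 + b2 * y1)
          - b0 * ((x0 + x1 + x2) - (y0 + y1 + y2)) - (b1 - b0) * (x2 - y2)"
        by (simp add: algebra_simps)
      also have "\<dots> = 0"
      proof -
        have "x2 - y2 = 0" using e2 by simp
        then show ?thesis by (simp only: gx gy es) simp
      qed
      finally have "x1 = y1" using True by simp
      then show "x = y" using es e2 unfolding x y by simp
    qed
    have sub: "\<phi> ` Z \<subseteq> {t::'a. t \<noteq> 0} \<times> (UNIV::'a set)" unfolding \<phi>_def Z_def by auto
    have "card Z = card (\<phi> ` Z)" using card_image[OF inj] by simp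
    also have "\<dots> \<le> (3^m - 1) * 3^m" using card_mono[OF fT sub] cT by simp
    finally show ?thesis unfolding Z_def by (simp add: mult.commute)
  next
    case False
    then have b20: "b2 = b0" by simp
    show ?thesis
    proof (cases "b1 \<noteq> b0")
      case True
      define \<phi> where "\<phi> x = (s3 x, fst (snd x))" for x :: "'a rtriple"
      have inj: "inj_on \<phi> Z"
      proof (rule inj_onI)
        fix x y assume xy: "x \<in> Z" "y \<in> Z" "\<phi> x = \<phi> y"
        obtain x0 x1 x2 where x: "x = (x0, x1, x2)" by (cases x)
        obtain y0 y1 y2 where y: "y = (y0, y1, y2)" by (cases y)
        have gx: "b0 * x0 + b1 * x2 + b2 * x1 = 0" using xy(1) g[of x] unfolding Z_def x by simp
        have gy: "b0 * y0 + b1 * y2 + b2 * y1 = 0" using xy(2) g[of y] unfolding Z_def y by simp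
        have es: "x0 + x1 + x2 = y0 + y1 + y2" and e1: "x1 = y1"
          using xy(3) unfolding \<phi>_def x y s3_def by auto
        have "(b1 - b0) * (x2 - y2) = (b0 * x0 + b1 * x2 + b2 * x1) - (b0 * y0 + b1 * y2 + b2 * y1)
            - b0 * ((x0 + x1 + x2) - (y0 + y1 + y2)) - (b2 - b0) * (x1 - y1)"
          by (simp add: algebra_simps)
        also have "\<dots> = 0"
        proof -
          have "x1 - y1 = 0" using e1 by simp
          then show ?thesis by (simp only: gx gy es) simp
        qed
        finally have "x2 = y2" using True by simp
        then show "x = y" using es e1 unfolding x y by simp
      qed
      have sub: "\<phi> ` Z \<subseteq> {t::'a. t \<noteq> 0} \<times> (UNIV::'a set)" unfolding \<phi>_def Z_def by auto
      have "card Z = card (\<phi> ` Z)" using card_image[OF inj] by simp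
      also have "\<dots> \<le> (3^m - 1) * 3^m" using card_mono[OF fT sub] cT by simp
      finally show ?thesis unfolding Z_def by (simp add: mult.commute)
    next
      case False
      then have b10: "b1 = b0" by simp
      have b00: "b0 \<noteq> 0" using b unfolding bb b10 b20 by simp
      have fb: "fst (rmul b x) = b0 * s3 x" for x
        unfolding g b10 b20 by (cases x) (simp add: s3_def algebra_simps)
      have E: "{x\<in>U. fst (rmul b x) = 0} = {}" using b00 by (auto simp: fb)
      show ?thesis unfolding E by simp
    qed
  qed
qed

end


context ffield begin

lemma q3: "3 \<le> (3::nat)^m"
proof -
  obtain p where "m = Suc p" using m_pos by (cases m) auto
  then show ?thesis by simp
qed

lemma sum_ind_const: "finite A \<Longrightarrow> (\<Sum>x\<in>A. if P x then c else (0::nat)) = c * card {x\<in>A. P x}"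
proof -
  assume f: "finite A"
  have "(\<Sum>x\<in>A. if P x then c else (0::nat)) = (\<Sum>x\<in>A. c * (if P x then 1 else 0))"
    by (intro sum.cong) auto
  also have "\<dots> = c * card {x\<in>A. P x}" using f by (simp add: sum_distrib_left[symmetric] ind_card)
  finally show ?thesis .
qed

lemma inner_count: "card {l::'a. l \<noteq> 0 \<and> tr (l * t) \<noteq> 0} = (if t = 0 then 0 else card {x::'a. tr x \<noteq> 0})"
proof (cases "t = 0")
  case True
  then show ?thesis by (simp add: tr0)
next
  case False
  have "{l::'a. l \<noteq> 0 \<and> tr (l * t) \<noteq> 0} = {l. tr (l * t) \<noteq> 0}" using tr0 by auto
  then show ?thesis using count_scaled[OF False] False by simp
qed

lemma avg:
  assumes b: "b \<noteq> (0, 0, (0::'a))"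
  shows "3^m * (3^m - 1) * card {x::'a. tr x \<noteq> 0} \<le> card {x\<in>U. tr (fst (rmul b x)) \<noteq> 0}"
proof -
  define q :: nat where "q = 3^m"
  define N0 where "N0 = card {x\<in>U. tr (fst (rmul b x)) \<noteq> 0}"
  define Nz where "Nz = card {x::'a. tr x \<noteq> 0}"
  define A where "A = {l::'a. l \<noteq> 0}"
  have cA: "card A = q - 1"
  proof -
    have "A = UNIV - {0}" unfolding A_def by auto
    then show ?thesis using card_F unfolding q_def by (simp add: card_Diff_singleton)
  qed
  have fU: "finite U" by simp
  have fA: "finite A" by simp
  have "(q - 1) * N0 = (\<Sum>l\<in>A. N0)" using cA by simp
  also have "\<dots> = (\<Sum>l\<in>A. card {x\<in>U. tr (l * fst (rmul b x)) \<noteq> 0})"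
    unfolding N0_def A_def by (intro sum.cong refl N0_scale) simp
  also have "\<dots> = (\<Sum>l\<in>A. \<Sum>x\<in>U. if tr (l * fst (rmul b x)) \<noteq> 0 then 1 else 0)"
    by (intro sum.cong refl) (rule ind_card[OF fU])
  also have "\<dots> = (\<Sum>x\<in>U. \<Sum>l\<in>A. if tr (l * fst (rmul b x)) \<noteq> 0 then 1 else 0)"
    by (rule sum.swap)
  also have "\<dots> = (\<Sum>x\<in>U. card {l\<in>A. tr (l * fst (rmul b x)) \<noteq> 0})"
    by (intro sum.cong refl) (rule ind_card[OF fA, symmetric])
  also have "\<dots> = (\<Sum>x\<in>U. if fst (rmul b x) \<noteq> 0 then Nz else 0)"
  proof (intro sum.cong refl)
    fix x
    have "{l\<in>A. tr (l * fst (rmul b x)) \<noteq> 0} = {l::'a. l \<noteq> 0 \<and> tr (l * fst (rmul b x)) \<noteq> 0}"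
      unfolding A_def by auto
    then show "card {l\<in>A. tr (l * fst (rmul b x)) \<noteq> 0} = (if fst (rmul b x) \<noteq> 0 then Nz else 0)"
      using inner_count[of "fst (rmul b x)"] unfolding Nz_def by simp
  qed
  also have "\<dots> = Nz * card {x\<in>U. fst (rmul b x) \<noteq> 0}" using fU by (rule sum_ind_const)
  finally have eq: "(q - 1) * N0 = Nz * card {x\<in>U. fst (rmul b x) \<noteq> 0}" .
  have split: "card U = card {x\<in>U. fst (rmul b x) \<noteq> 0} + card {x\<in>U. fst (rmul b x) = 0}"
  proof -
    have "U = {x\<in>U. fst (rmul b x) \<noteq> 0} \<union> {x\<in>U. fst (rmul b x) = 0}" by auto
    moreover have "{x\<in>U. fst (rmul b x) \<noteq> 0} \<inter> {x\<in>U. fst (rmul b x) = 0} = {}" by auto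
    ultimately show ?thesis by (metis (no_types, lifting) card_Un_disjoint finite)
  qed
  have cU: "card U = (q - 1) * q * q" using card_runits unfolding runits_eq q_def .
  have zb: "card {x\<in>U. fst (rmul b x) = 0} \<le> q * (q - 1)" using zero_bound[OF b] unfolding q_def .
  have q1: "q \<ge> 3" unfolding q_def by (rule q3)
  have e1: "(q - 1) * q * q = (q - 1) * (q * (q - 1)) + (q - 1) * q"
  proof -
    obtain r where r: "q = Suc r" using q1 by (cases q) auto
    show ?thesis unfolding r by (simp add: algebra_simps)
  qed
  have e2: "q * (q - 1) = (q - 1) * q" by (simp add: mult.commute)
  have "(q - 1) * (q * (q - 1)) \<le> card {x\<in>U. fst (rmul b x) \<noteq> 0}"
    using split cU zb e1 e2 by linarith
  then have "Nz * ((q - 1) * (q * (q - 1))) \<le> (q - 1) * N0" unfolding eq by (rule mult_le_mono2)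
  then have "(q - 1) * (q * (q - 1) * Nz) \<le> (q - 1) * N0" by (simp add: algebra_simps)
  then have "q * (q - 1) * Nz \<le> N0" using q1 by simp
  then show ?thesis unfolding q_def N0_def Nz_def .
qed

end


context ffield begin

lemma weight_units:
  assumes b: "b \<noteq> (0, 0, (0::'a))"
  shows "2 * 3^m * 3^m * (3^m - 1) \<le> (\<Sum>x\<in>U. wt3 (Tr m (rmul b x)))"
proof -
  have "(\<Sum>x\<in>U. wt3 (Tr m (rmul b x))) = 3 * card {x\<in>U. tr (fst (rmul b x)) \<noteq> 0}" by (rule W_3)
  moreover have "3 * (3^m * (3^m - 1) * card {x::'a. tr x \<noteq> 0}) \<le> 3 * card {x\<in>U. tr (fst (rmul b x)) \<noteq> 0}"
    using avg[OF b] by simp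
  moreover have "3 * (3^m * (3^m - 1) * card {x::'a. tr x \<noteq> 0}) = 3^m * (3^m - 1) * (3 * card {x::'a. tr x \<noteq> 0})"
    by (simp add: algebra_simps)
  ultimately show ?thesis using count_nz by (simp add: algebra_simps)
qed

lemma wt3_neg: "wt3 (Tr m (rscale (-1) z)) = wt3 (Tr m (z::'a rtriple))"
  by (cases z) (simp add: wt3_def Tr_def rscale_def tr_neg)

lemma weight_L':
  assumes odd: "odd m" and b: "b \<noteq> (0, 0, (0::'a))"
  shows "3^m * 3^m * (3^m - 1) \<le> (\<Sum>x\<in>L'. wt3 (Tr m (rmul b x)))"
proof -
  define F where "F x = wt3 (Tr m (rmul b x))" for x
  define N where "N = {x::'a rtriple. s3 x \<noteq> 0 \<and> s3 x \<notin> nz_squares}"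
  have LU: "U = (L'::'a rtriple set) \<union> N" unfolding L'_eq N_def nz_squares_def by auto
  have dj: "(L'::'a rtriple set) \<inter> N = {}" unfolding L'_eq N_def by auto
  have fin: "finite (L'::'a rtriple set)" "finite N" by simp_all
  have inj: "inj_on (rscale (-1)) (L'::'a rtriple set)"
  proof (rule inj_onI)
    fix x y :: "'a rtriple" assume "rscale (-1) x = rscale (-1) y"
    then show "x = y" by (cases x; cases y) (simp add: rscale_def)
  qed
  have img: "rscale (-1) ` (L'::'a rtriple set) = N"
  proof (rule subset_antisym)
    show "rscale (-1) ` (L'::'a rtriple set) \<subseteq> N"
    proof
      fix y assume "y \<in> rscale (-1) ` (L'::'a rtriple set)"
      then obtain x where x: "x \<in> (L'::'a rtriple set)" "y = rscale (-1) x" by auto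
      then have sq: "s3 x \<in> nz_squares" unfolding L'_eq by simp
      then have nz: "s3 x \<noteq> 0" unfolding nz_squares_def by simp
      have "- s3 x \<notin> nz_squares" using sq_split[OF odd nz] sq by simp
      then show "y \<in> N" unfolding N_def x(2) using nz by (simp add: s3_rscale)
    qed
    show "N \<subseteq> rscale (-1) ` (L'::'a rtriple set)"
    proof
      fix y assume y: "y \<in> N"
      then have nz: "s3 y \<noteq> 0" and nsq: "s3 y \<notin> nz_squares" unfolding N_def by auto
      have "- s3 y \<in> nz_squares" using sq_split[OF odd nz] nsq by simp
      then have "rscale (-1) y \<in> (L'::'a rtriple set)" unfolding L'_eq by (simp add: s3_rscale)
      moreover have "y = rscale (-1) (rscale (-1) y)" by (cases y) (simp add: rscale_def)
      ultimately show "y \<in> rscale (-1) ` (L'::'a rtriple set)" by (rule rev_image_eqI)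
    qed
  qed
  have "sum F N = sum (F \<circ> rscale (-1)) (L'::'a rtriple set)" unfolding img[symmetric] by (rule sum.reindex[OF inj])
  also have "\<dots> = sum F (L'::'a rtriple set)"
  proof (rule sum.cong)
    fix x show "(F \<circ> rscale (-1)) x = F x" unfolding F_def o_def rmul_rscale by (rule wt3_neg)
  qed simp
  finally have sN: "sum F N = sum F (L'::'a rtriple set)" .
  have "sum F U = sum F (L'::'a rtriple set) + sum F N" unfolding LU by (rule sum.union_disjoint[OF fin dj])
  then have "sum F U = 2 * sum F (L'::'a rtriple set)" using sN by simp
  moreover have "2 * 3^m * 3^m * (3^m - 1) \<le> sum F U" unfolding F_def by (rule weight_units[OF b])
  ultimately show ?thesis unfolding F_def by simp
qed

end


lemma hamming_sum: "hamming v w = (\<Sum>i<length v. if v!i \<noteq> w!i then 1 else 0)"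
proof -
  have e: "{i. i < length v \<and> v!i \<noteq> w!i} = {i\<in>{..<length v}. v!i \<noteq> w!i}" by auto
  show ?thesis unfolding hamming_def e by (rule ind_card) simp
qed

lemma hamming_Nil: "hamming [] w = 0" by (simp add: hamming_def)

lemma hamming_Cons: "hamming (x#u) (y#u') = (if x \<noteq> y then 1 else 0) + hamming u u'"
  unfolding hamming_sum by (simp add: sum.lessThan_Suc_shift del: sum.lessThan_Suc)

lemma hamming_append: "length u = length u' \<Longrightarrow> hamming (u@v) (u'@v') = hamming u u' + hamming v v'"
proof (induction u arbitrary: u')
  case Nil then show ?case by (simp add: hamming_Nil)
next
  case (Cons x u)
  then obtain y u'' where "u' = y # u''" by (cases u') auto
  with Cons show ?case by (simp add: hamming_Cons)
qed

lemma gray_len: "length (gray r) = 3"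
  by (cases r) (simp add: gray_def)

lemma gray_vec_Cons: "gray_vec (map f (x#xs)) = gray (f x) @ gray_vec (map f xs)"
  by (simp add: gray_vec_def)

lemma gray_vec_len: "length (gray_vec (map f xs)) = 3 * length xs"
  by (induction xs) (simp_all add: gray_vec_def gray_len)

lemma hamming_gray_vec:
  "hamming (gray_vec (map f xs)) (gray_vec (map g xs)) = (\<Sum>x\<leftarrow>xs. hamming (gray (f x)) (gray (g x)))"
proof (induction xs)
  case Nil then show ?case by (simp add: gray_vec_def hamming_Nil)
next
  case (Cons x xs)
  then show ?case unfolding gray_vec_Cons by (simp add: hamming_append gray_len)
qed

lemma hamming_gray: "hamming (gray (a, b, c)) (gray (a', b', c')) =
   (if to_F3 a \<noteq> to_F3 a' then 1 else 0) + (if to_F3 b \<noteq> to_F3 b' then 1 else 0) + (if to_F3 c \<noteq> to_F3 c' then 1 else 0)"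
  by (simp add: gray_def hamming_Cons hamming_Nil)

lemma ter_add_append: "length u = length u' \<Longrightarrow> ter_add (u @ v) (u' @ v') = ter_add u u' @ ter_add v v'"
  by (simp add: ter_add_def)

lemma ter_smult_append: "ter_smult c (u @ v) = ter_smult c u @ ter_smult c v"
  by (simp add: ter_smult_def)

lemma ter_add_gray_vec:
  assumes "\<And>x. ter_add (gray (f x)) (gray (g x)) = gray (h x)"
  shows "ter_add (gray_vec (map f xs)) (gray_vec (map g xs)) = gray_vec (map h xs)"
proof (induction xs)
  case Nil then show ?case by (simp add: gray_vec_def ter_add_def)
next
  case (Cons x xs)
  then show ?case unfolding gray_vec_Cons by (simp add: ter_add_append gray_len assms)
qed

lemma ter_smult_gray_vec:
  assumes "\<And>x. ter_smult c (gray (f x)) = gray (h x)"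
  shows "ter_smult c (gray_vec (map f xs)) = gray_vec (map h xs)"
proof (induction xs)
  case Nil then show ?case by (simp add: gray_vec_def ter_smult_def)
next
  case (Cons x xs)
  then show ?case unfolding gray_vec_Cons by (simp add: ter_smult_append assms)
qed

definition rsub :: "'a::comm_ring_1 rtriple \<Rightarrow> 'a rtriple \<Rightarrow> 'a rtriple" where
  "rsub a a' = radd a (rscale (-1) a')"

lemma rmul_rsub: "rmul (rsub a a') x =
   (fst (rmul a x) - fst (rmul a' x), fst (snd (rmul a x)) - fst (snd (rmul a' x)), snd (snd (rmul a x)) - snd (snd (rmul a' x)))"
  by (cases a; cases a'; cases x) (simp add: rsub_def rmul_def radd_def rscale_def algebra_simps)

lemma rmul_radd: "rmul (radd a a') x =
   (fst (rmul a x) + fst (rmul a' x), fst (snd (rmul a x)) + fst (snd (rmul a' x)), snd (snd (rmul a x)) + snd (snd (rmul a' x)))"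
  by (cases a; cases a'; cases x) (simp add: rmul_def radd_def algebra_simps)

lemma rmul_rscale_left: "rmul (rscale l a) x = rscale l (rmul a x)"
  by (cases a; cases x) (simp add: rmul_def rscale_def algebra_simps)

lemma rsub_eq0: "rsub a a' = (0, 0, 0) \<longleftrightarrow> a = (a'::'a::comm_ring_1 rtriple)"
  by (cases a; cases a') (auto simp: rsub_def radd_def rscale_def)

lemma to_F3_range: "to_F3 t \<in> {0, 1, 2}"
  by (simp add: to_F3_def)

lemma gray_vec_words: "gray_vec (map f xs) \<in> ter_words (3 * length xs)"
proof -
  have "set (gray_vec (map f xs)) \<subseteq> {0,1,2}"
    by (induction xs) (auto simp: gray_vec_def gray_def to_F3_def split: prod.splits)
  then show ?thesis unfolding ter_words_def using gray_vec_len by auto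
qed

definition cw :: "nat \<Rightarrow> 'a::comm_ring_1 rtriple list \<Rightarrow> 'a rtriple \<Rightarrow> int list" where
  "cw m xs a = gray_vec (map (\<lambda>x. Tr m (rmul a x)) xs)"

lemma gray_code_eq: "gray_code m xs = range (cw m xs)"
  unfolding gray_code_def code_C_def cw_def by auto

context ffield begin

abbreviation T :: "'a set" where "T \<equiv> {0, 1, -1}"

lemma tr_T: "tr x \<in> T" using tr_vals[of x] by auto

lemma to_F3_vals: "to_F3 (0::'a) = 0" "to_F3 (1::'a) = 1" "to_F3 (-1::'a) = 2"
  using one_ne_neg by (auto simp: to_F3_def)

lemma to_F3_inj: "s \<in> T \<Longrightarrow> s' \<in> T \<Longrightarrow> (to_F3 s = to_F3 s') = (s = s')"
  using to_F3_vals by auto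

lemma pm: "(1::'a) + 1 = -1" "(-1::'a) + -1 = 1"
proof -
  show "(1::'a) + 1 = -1" using two_neg by (simp add: one_add_one)
  then show "(-1::'a) + -1 = 1" by (metis minus_add_distrib minus_minus)
qed

lemma to_F3_add: "s \<in> T \<Longrightarrow> s' \<in> T \<Longrightarrow> (to_F3 s + to_F3 s') mod 3 = to_F3 (s + s')"
  by (elim insertE; simp add: to_F3_vals pm two_neg)

lemma to_F3_neg: "s \<in> T \<Longrightarrow> (2 * to_F3 s) mod 3 = to_F3 (- s)"
  by (elim insertE; simp add: to_F3_vals)

lemma ham_block:
  fixes a a' x :: "'a rtriple"
  shows "hamming (gray (Tr m (rmul a x))) (gray (Tr m (rmul a' x))) = wt3 (Tr m (rmul (rsub a a') x))"
proof -
  obtain p q r where e: "rmul a x = (p, q, r)" by (cases "rmul a x")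
  obtain p' q' r' where e': "rmul a' x = (p', q', r')" by (cases "rmul a' x")
  have h: "(to_F3 (tr u) = to_F3 (tr u')) = (tr (u - u') = 0)" for u u'
    using to_F3_inj[OF tr_T tr_T, of u u'] by (simp add: tr_diff)
  show ?thesis unfolding rmul_rsub e e' by (simp add: Tr_def hamming_gray wt3_def h)
qed

lemma ham_cw:
  fixes a a' :: "'a rtriple"
  shows "distinct xs \<Longrightarrow> hamming (cw m xs a) (cw m xs a') = (\<Sum>x\<in>set xs. wt3 (Tr m (rmul (rsub a a') x)))"
  unfolding cw_def hamming_gray_vec ham_block by (simp add: sum_list_distinct_conv_sum_set)

lemma cw_zero: "cw m xs (0, 0, (0::'a)) = replicate (3 * length xs) 0"
proof -
  have z: "rmul (0, 0, 0) x = ((0::'a), 0, 0)" for x by (cases x) (simp add: rmul_def)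
  show ?thesis unfolding cw_def z
    by (induction xs) (simp_all add: gray_vec_def Tr_def tr0 gray_def to_F3_def numeral_3_eq_3)
qed

lemma cw_add:
  fixes a a' :: "'a rtriple"
  shows "ter_add (cw m xs a) (cw m xs a') = cw m xs (radd a a')"
  unfolding cw_def
proof (rule ter_add_gray_vec)
  fix x
  obtain p q r where e: "rmul a x = (p, q, r)" by (cases "rmul a x")
  obtain p' q' r' where e': "rmul a' x = (p', q', r')" by (cases "rmul a' x")
  show "ter_add (gray (Tr m (rmul a x))) (gray (Tr m (rmul a' x))) = gray (Tr m (rmul (radd a a') x))"
    unfolding rmul_radd e e' by (simp add: Tr_def gray_def ter_add_def to_F3_add[OF tr_T tr_T] tr_add)
qed

lemma cw_neg:
  fixes a :: "'a rtriple"
  shows "ter_smult 2 (cw m xs a) = cw m xs (rscale (-1) a)"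
  unfolding cw_def
proof (rule ter_smult_gray_vec)
  fix x
  obtain p q r where e: "rmul a x = (p, q, r)" by (cases "rmul a x")
  show "ter_smult 2 (gray (Tr m (rmul a x))) = gray (Tr m (rmul (rscale (-1) a) x))"
    unfolding rmul_rscale_left e by (simp add: Tr_def gray_def ter_smult_def rscale_def to_F3_neg[OF tr_T] tr_neg)
qed

lemma smult1: "w \<in> ter_words n \<Longrightarrow> ter_smult 1 w = w"
  unfolding ter_words_def ter_smult_def by (auto intro!: map_idI)

lemma smult0: "w \<in> ter_words n \<Longrightarrow> ter_smult 0 w = replicate n 0"
  unfolding ter_words_def ter_smult_def by (auto simp: map_replicate_const)

lemma code_linear: "ternary_linear_code (3 * length xs) (gray_code m (xs :: 'a rtriple list))"
  unfolding ternary_linear_code_def gray_code_eq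
proof (intro conjI ballI)
  show "range (cw m xs) \<subseteq> ter_words (3 * length xs)" unfolding cw_def using gray_vec_words by auto
  show "replicate (3 * length xs) 0 \<in> range (cw m xs)" using cw_zero[symmetric] by blast
  fix v w assume "v \<in> range (cw m xs)" "w \<in> range (cw m xs)"
  then obtain a a' where "v = cw m xs a" "w = cw m xs a'" by auto
  then show "ter_add v w \<in> range (cw m xs)" using cw_add by auto
next
  fix c w assume c: "c \<in> {0, 1, 2::int}" and w: "w \<in> range (cw m xs)"
  then obtain a where a: "w = cw m xs a" by auto
  have ww: "w \<in> ter_words (3 * length xs)" unfolding a cw_def by (rule gray_vec_words)
  show "ter_smult c w \<in> range (cw m xs)"
  proof -
    have "c = 0 \<or> c = 1 \<or> c = 2" using c by auto
    then show ?thesis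
    proof (elim disjE)
      assume "c = 0" then show ?thesis using smult0[OF ww] cw_zero[symmetric] by auto
    next
      assume "c = 1" then show ?thesis using smult1[OF ww] w by auto
    next
      assume "c = 2" then show ?thesis using cw_neg a by auto
    qed
  qed
qed

end


context ffield begin

lemma card_rtriple: "card (UNIV :: 'a rtriple set) = 3^(3*m)"
proof -
  have "card (UNIV :: 'a rtriple set) = card ((UNIV::'a set) \<times> ((UNIV::'a set) \<times> (UNIV::'a set)))" by simp
  also have "\<dots> = card (UNIV::'a set) * (card (UNIV::'a set) * card (UNIV::'a set))"
    by (simp only: card_cartesian_product)
  also have "\<dots> = 3^(3*m)" using card_F by (simp add: power_mult[symmetric] power_add[symmetric] mult.commute)
  finally show ?thesis .
qed

lemma optimal_case:
  fixes xs :: "'a rtriple list"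
  assumes dist: "distinct xs"
    and wb: "\<And>b::'a rtriple. b \<noteq> (0, 0, 0) \<Longrightarrow> D \<le> (\<Sum>x\<in>set xs. wt3 (Tr m (rmul b x)))"
    and Dpos: "D > 0"
    and grsb: "3 * length xs < grs (3*m) (D + 1)"
  shows "optimal_ternary (3 * length xs) (gray_code m xs)"
proof -
  define n where "n = 3 * length xs"
  define C where "C = gray_code m xs"
  have lin: "ternary_linear_code n C" unfolding n_def C_def by (rule code_linear)
  have hd: "D \<le> hamming (cw m xs a) (cw m xs a')" if "a \<noteq> a'" for a a' :: "'a rtriple"
  proof -
    have "rsub a a' \<noteq> (0, 0, 0)" using that rsub_eq0 by blast
    then show ?thesis using wb ham_cw[OF dist] by simp
  qed
  have inj: "inj (cw m xs)"
  proof (rule injI)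
    fix a a' :: "'a rtriple" assume e: "cw m xs a = cw m xs a'"
    show "a = a'"
    proof (rule ccontr)
      assume "a \<noteq> a'"
      then have "D \<le> hamming (cw m xs a) (cw m xs a')" by (rule hd)
      moreover have "hamming (cw m xs a') (cw m xs a') = 0" by (simp add: hamming_def)
      ultimately show False using e Dpos by simp
    qed
  qed
  have cardC: "card C = 3^(3*m)" unfolding C_def gray_code_eq using card_image[OF inj] card_rtriple by simp
  have finC: "finite C" by (rule linear_code_finite[OF lin])
  define P where "P = {hamming v w | v w. v \<in> C \<and> w \<in> C \<and> v \<noteq> w}"
  have finP: "finite P"
  proof -
    have "P \<subseteq> (\<lambda>(v,w). hamming v w) ` (C \<times> C)" unfolding P_def by auto
    then show ?thesis using finC finite_subset by blast
  qed
  have neP: "P \<noteq> {}"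
  proof -
    have "(0, 0, 0) \<noteq> ((1, 0, 0) :: 'a rtriple)" by simp
    then have "cw m xs (0, 0, 0) \<noteq> cw m xs (1, 0, 0)" using inj by (metis injD)
    then show ?thesis unfolding P_def C_def gray_code_eq by blast
  qed
  have mdC: "D \<le> min_dist C"
  proof -
    have "Min P \<in> P" using finP neP by (rule Min_in)
    then obtain v w where vw: "v \<in> C" "w \<in> C" "v \<noteq> w" "Min P = hamming v w" unfolding P_def by blast
    obtain a a' where aa: "v = cw m xs a" "w = cw m xs a'" using vw(1,2) unfolding C_def gray_code_eq by auto
    then have "a \<noteq> a'" using vw(3) by auto
    then have "D \<le> hamming (cw m xs a) (cw m xs a')" by (rule hd)
    then have "D \<le> hamming v w" using aa by simp
    then show ?thesis unfolding min_dist_def using vw(4) P_def by simp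
  qed
  have "optimal_ternary n C"
    unfolding optimal_ternary_def
  proof (intro conjI allI impI)
    show "ternary_linear_code n C" by (rule lin)
    fix C' assume C': "ternary_linear_code n C' \<and> ter_dim n C' = ter_dim n C"
    have "card C' = card C" using dim_card[OF lin] dim_card[of n C'] C' by simp
    then have K: "3^(3*m) \<le> card C'" using cardC by simp
    have "min_dist C' \<le> D" by (rule min_dist_le[OF conjunct1[OF C'] K]) (use grsb n_def in simp)
    then show "min_dist C' \<le> min_dist C" using mdC by simp
  qed
  then show ?thesis unfolding n_def C_def .
qed

end

theorem theorem6p1:
  fixes m :: nat
  assumes "card (UNIV :: ('a::{field, finite}) set) = 3 ^ m" and "m > 0"
  shows "(odd m \<longrightarrow>
           (\<forall>xs :: 'a rtriple list. distinct xs \<and> set xs = L' \<longrightarrow>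
              3 * length xs = (3 ^ (3 * m + 1) - 3 ^ (2 * m + 1)) div 2 \<and>
              optimal_ternary (3 * length xs) (gray_code m xs)))
       \<and> (\<forall>xs :: 'a rtriple list. distinct xs \<and> set xs = runits \<longrightarrow>
              3 * length xs = 3 ^ (3 * m + 1) - 3 ^ (2 * m + 1) \<and>
              optimal_ternary (3 * length xs) (gray_code m xs))"
proof -
  interpret F: ffield m "TYPE('a)" using assms by unfold_locales
  define q :: nat where "q = 3^m"
  have q3: "q \<ge> 3" unfolding q_def by (rule F.q3)
  have p1: "(3::nat) ^ (3 * m + 1) = 3 * q^3" unfolding q_def by (simp add: power_add power_mult[symmetric] mult.commute)
  have p2: "(3::nat) ^ (2 * m + 1) = 3 * q^2" unfolding q_def by (simp add: power_add power_mult[symmetric] mult.commute)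
  have diff: "3 * q^3 - 3 * q^2 = 3 * (q^2 * (q - 1))"
    by (simp add: power2_eq_square power3_eq_cube diff_mult_distrib2 algebra_simps)
  have A: "(3::nat) ^ (3*m+1) - 3^(2*m+1) = 3 * (q^2 * (q - 1))" unfolding p1 p2 by (rule diff)
  have AC: "q^2 * (q - 1) = (q - 1) * q * q" by (simp add: power2_eq_square mult.commute mult.left_commute)
  show ?thesis
  proof (intro conjI impI allI)
    fix xs :: "'a rtriple list" assume "odd m" and xs: "distinct xs \<and> set xs = L'"
    have len: "2 * length xs = (q - 1) * q * q"
      using F.card_L' distinct_card[of xs] xs unfolding q_def by simp
    have B: "q^2 * (q - 1) = 2 * length xs" using len AC by simp
    show "3 * length xs = (3 ^ (3 * m + 1) - 3 ^ (2 * m + 1)) div 2"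
      unfolding A B by simp
    show "optimal_ternary (3 * length xs) (gray_code m xs)"
    proof (rule F.optimal_case[where D = "q^2 * (q - 1)"])
      show "distinct xs" using xs by simp
      show "q^2 * (q - 1) \<le> (\<Sum>x\<in>set xs. wt3 (Tr m (rmul b x)))" if "b \<noteq> (0, 0, 0)" for b :: "'a rtriple"
        using F.weight_L'[OF \<open>odd m\<close> that] xs unfolding q_def by (simp add: power2_eq_square)
      show "q^2 * (q - 1) > 0" using q3 by simp
      have "3 * (3^m)^2 * (3^m - 1) < 2 * grs (3*m) ((3^m)^2 * (3^m - 1) + 1)"
        by (rule grs_bound_i[OF assms(2)])
      then show "3 * length xs < grs (3 * m) (q^2 * (q - 1) + 1)"
        using len unfolding q_def by (simp add: power2_eq_square algebra_simps)
    qed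
  next
    fix xs :: "'a rtriple list" assume xs: "distinct xs \<and> set xs = runits"
    have len: "length xs = (q - 1) * q * q"
      using F.card_runits distinct_card[of xs] xs unfolding q_def by simp
    have B: "q^2 * (q - 1) = length xs" using len AC by simp
    show "3 * length xs = 3 ^ (3 * m + 1) - 3 ^ (2 * m + 1)"
      unfolding A B by simp
    show "optimal_ternary (3 * length xs) (gray_code m xs)"
    proof (rule F.optimal_case[where D = "2 * q^2 * (q - 1)"])
      show "distinct xs" using xs by simp
      show "2 * q^2 * (q - 1) \<le> (\<Sum>x\<in>set xs. wt3 (Tr m (rmul b x)))" if "b \<noteq> (0, 0, 0)" for b :: "'a rtriple"
        using F.weight_units[OF that] xs F.runits_eq unfolding q_def by (simp add: power2_eq_square)
      show "2 * q^2 * (q - 1) > 0" using q3 by simp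
      have "3 * (3^m)^2 * (3^m - 1) < grs (3*m) (2 * (3^m)^2 * (3^m - 1) + 1)"
        by (rule grs_bound_ii[OF assms(2)])
      then show "3 * length xs < grs (3 * m) (2 * q^2 * (q - 1) + 1)"
        using len unfolding q_def by (simp add: power2_eq_square algebra_simps)
    qed
  qed
qed


end
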